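(* Consider the stochastic energy exchange model, the set $G$, the return times $T_n$ and the induced chain $\hat{\mathbf{E}}_n$ described in the context, and let $\hat V=\max\{V,1\}$ and $\hat\alpha=2-2\eta$. There exists a constant $C_5$ such that $$\mathbb{E}\big[(T_{n+1}-T_n)^{\hat\alpha}\mid\hat{\mathbf{E}}_n\big]\le C_5\hat V(\hat{\mathbf{E}}_n)$$ for every $\hat{\mathbf{E}}_n$ and every $n\ge0$. In particular, if $n\ge1$ then $\mathbb{E}[(T_{n+1}-T_n)^{\hat\alpha}\mid\hat{\mathbf{E}}_n]\le C_5M_0$.
   Context: Fix $N\ge1$, $T_L,T_R>0$, a sufficiently large $K$ ($K\gg T_L,T_R$) and $R(a,b)=\min\{K,\sqrt{\min(a,b)}\}$. The stochastic energy exchange model is the Markov jump process $\mathbf{E}_t=(E_1(t),\dots,E_N(t))$ on $\mathbb{R}^N_+$: for $i=1,\dots,N-1$ a clock of rate $R(E_i,E_{i+1})$ on sites $i,i+1$; when it rings $(E_i,E_{i+1})\mapsto(p(E_i+E_{i+1}),(1-p)(E_i+E_{i+1}))$, $p$ uniform on $(0,1)$; a clock of rate $R(T_L,E_1)$ (resp. $R(E_N,T_R)$) with $E_1\mapsto p(E_1+X_L)$ (resp. $E_N\mapsto p(E_N+X_R)$), $X_L,X_R$ exponential with means $T_L,T_R$; all independent. $P^t$ is its transition kernel. Let $a_m=1-\frac{2^{m-1}-1}{2^N-1}$, and for small $\eta>0$, $V(\mathbf{E})=\sum_{m=1}^N\sum_{k=1}^{N-m+1}\big(\sum_{j=0}^{m-1}E_{k+j}\big)^{a_m\eta-1}$.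 Fix sufficiently small $\eta>0$ and $h>0$, and a constant $M_0>1$ such that $P^hV(\mathbf{E})-V(\mathbf{E})\le-c_0V(\mathbf{E})^{\alpha}$ whenever $V(\mathbf{E})>M_0$, for some $c_0>0$, $\alpha=1-\frac{1}{2(1-\eta)}$. Let $G=\{\mathbf{E}:V(\mathbf{E})\le M_0\}$. With the time-$h$ sampling chain $\mathbf{E}_n:=\mathbf{E}_{nh}$, let $T_0=0$, $T_{n+1}=\inf\{k>T_n:\mathbf{E}_{kh}\in G\}$ and $\hat{\mathbf{E}}_n=\mathbf{E}_{T_nh}$. *)

theory Defs
  imports "HOL-Analysis.Analysis"
begin

text \<open>States: functions nat => real, site i of the paper is index i-1 (i < N).
  Nonnegative test functions are ennreal-valued; kernels are given as operators
  f |-> (x |-> integral of f against the kernel at x).\<close>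

type_synonym state = "nat \<Rightarrow> real"

definition rate :: "real \<Rightarrow> real \<Rightarrow> real \<Rightarrow> real" where
  "rate K a b = min K (sqrt (min a b))"

definition unif_int :: "(real \<Rightarrow> ennreal) \<Rightarrow> ennreal" where
  "unif_int g = (\<integral>\<^sup>+ p. indicator {0<..<1} p * g p \<partial>lborel)"

definition exp_int :: "real \<Rightarrow> (real \<Rightarrow> ennreal) \<Rightarrow> ennreal" where
  "exp_int T g = (\<integral>\<^sup>+ X. indicator {0<..} X * ennreal (exp (- X / T) / T) * g X \<partial>lborel)"

definition bond_jump :: "nat \<Rightarrow> (state \<Rightarrow> ennreal) \<Rightarrow> state \<Rightarrow> ennreal" where
  "bond_jump i f x = unif_int (\<lambda>p. f (x(i := p * (x i + x (Suc i)),
                                       Suc i := (1 - p) * (x i + x (Suc i)))))"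

definition left_jump :: "real \<Rightarrow> (state \<Rightarrow> ennreal) \<Rightarrow> state \<Rightarrow> ennreal" where
  "left_jump TL f x = unif_int (\<lambda>p. exp_int TL (\<lambda>X. f (x(0 := p * (x 0 + X)))))"

definition right_jump :: "nat \<Rightarrow> real \<Rightarrow> (state \<Rightarrow> ennreal) \<Rightarrow> state \<Rightarrow> ennreal" where
  "right_jump N TR f x = unif_int (\<lambda>p. exp_int TR (\<lambda>X. f (x(N - 1 := p * (x (N - 1) + X)))))"

text \<open>Total jump rate; all N+1 clocks have rate at most K, so Lambda = (N+1) K
  is a uniformization constant.\<close>
definition total_rate :: "nat \<Rightarrow> real \<Rightarrow> real \<Rightarrow> real \<Rightarrow> state \<Rightarrow> real" where
  "total_rate N TL TR K x =
     (\<Sum>i<N - 1. rate K (x i) (x (Suc i))) + rate K TL (x 0) + rate K (x (N - 1)) TR"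

definition unif_const :: "nat \<Rightarrow> real \<Rightarrow> real" where
  "unif_const N K = real (N + 1) * K"

definition Jop :: "nat \<Rightarrow> real \<Rightarrow> real \<Rightarrow> real \<Rightarrow> (state \<Rightarrow> ennreal) \<Rightarrow> state \<Rightarrow> ennreal" where
  "Jop N TL TR K f x =
     (let L = unif_const N K in
       (\<Sum>i<N - 1. ennreal (rate K (x i) (x (Suc i)) / L) * bond_jump i f x)
       + ennreal (rate K TL (x 0) / L) * left_jump TL f x
       + ennreal (rate K (x (N - 1)) TR / L) * right_jump N TR f x
       + ennreal (1 - total_rate N TL TR K x / L) * f x)"

text \<open>Transition kernel P^t of the jump process (via uniformization):
  P^t f = sum_k e^{-L t} (L t)^k / k! J^k f.\<close>
definition Pt :: "nat \<Rightarrow> real \<Rightarrow> real \<Rightarrow> real \<Rightarrow> real \<Rightarrow> (state \<Rightarrow> ennreal) \<Rightarrow> state \<Rightarrow> ennreal" where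
  "Pt N TL TR K t f x =
     (\<Sum>k. ennreal (exp (- unif_const N K * t) * (unif_const N K * t) ^ k / fact k)
            * (Jop N TL TR K ^^ k) f x)"

definition a_coef :: "nat \<Rightarrow> nat \<Rightarrow> real" where
  "a_coef N m = 1 - (2 ^ (m - 1) - 1) / (2 ^ N - 1)"

definition Vfun :: "nat \<Rightarrow> real \<Rightarrow> state \<Rightarrow> real" where
  "Vfun N \<eta> x = (\<Sum>m\<in>{1..N}. \<Sum>k<N - m + 1.
                   (\<Sum>j<m. x (k + j)) powr (a_coef N m * \<eta> - 1))"

definition pos_state :: "nat \<Rightarrow> state \<Rightarrow> bool" where
  "pos_state N x \<longleftrightarrow> (\<forall>i<N. 0 < x i)"

text \<open>For the time-h chain and a set G:
  surv k x = P_x(X_1,...,X_k not in G),  hitp k x = P_x(tau_G = k+1),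
  where tau_G = inf {k >= 1. X_k in G}.\<close>
fun surv :: "((state \<Rightarrow> ennreal) \<Rightarrow> state \<Rightarrow> ennreal) \<Rightarrow> state set \<Rightarrow> nat \<Rightarrow> state \<Rightarrow> ennreal" where
  "surv P G 0 x = 1"
| "surv P G (Suc k) x = P (\<lambda>y. indicator (- G) y * surv P G k y) x"

fun hitp :: "((state \<Rightarrow> ennreal) \<Rightarrow> state \<Rightarrow> ennreal) \<Rightarrow> state set \<Rightarrow> nat \<Rightarrow> state \<Rightarrow> ennreal" where
  "hitp P G 0 x = P (indicator G) x"
| "hitp P G (Suc k) x = P (\<lambda>y. indicator (- G) y * hitp P G k y) x"

text \<open>E_x[tau_G ^ b] (value infinity if tau_G = infinity with positive probability).\<close>
definition return_moment ::
  "((state \<Rightarrow> ennreal) \<Rightarrow> state \<Rightarrow> ennreal) \<Rightarrow> state set \<Rightarrow> real \<Rightarrow> state \<Rightarrow> ennreal" where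
  "return_moment P G b x =
     (\<Sum>k. ennreal (real (Suc k) powr b) * hitp P G k x) + \<infinity> * (INF k. surv P G k x)"

end

theory Submission
  imports Defs
begin

lemma tangent_incr:
  fixes f f' :: "real \<Rightarrow> real"
  assumes der: "\<And>x. 0 < x \<Longrightarrow> (f has_real_derivative f' x) (at x)"
    and mono: "\<And>x y. 0 < x \<Longrightarrow> x \<le> y \<Longrightarrow> f' x \<le> f' y"
    and x: "0 < x" and y: "0 < y"
  shows "f x + f' x * (y - x) \<le> f y"
proof (cases x y rule: linorder_cases)
  case less
  then obtain z where z: "x < z" "z < y" "f y - f x = (y - x) * f' z"
    using MVT2[of x y f f'] der x by force
  have "f' x \<le> f' z" using mono x z by auto
  then have "(y - x) * f' x \<le> (y - x) * f' z" using less by (intro mult_left_mono) auto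
  then show ?thesis using z by (simp add: algebra_simps)
next
  case equal then show ?thesis by simp
next
  case greater
  then obtain z where z: "y < z" "z < x" "f x - f y = (x - y) * f' z"
    using MVT2[of y x f f'] der y by force
  have "f' z \<le> f' x" using mono y z by auto
  then have "(x - y) * f' z \<le> (x - y) * f' x" using greater by (intro mult_left_mono) auto
  then show ?thesis using z by (simp add: algebra_simps)
qed

lemma tangent_decr:
  fixes f f' :: "real \<Rightarrow> real"
  assumes der: "\<And>x. 0 < x \<Longrightarrow> (f has_real_derivative f' x) (at x)"
    and mono: "\<And>x y. 0 < x \<Longrightarrow> x \<le> y \<Longrightarrow> f' y \<le> f' x"
    and x: "0 < x" and y: "0 < y"
  shows "f y \<le> f x + f' x * (y - x)"
proof -
  have "(\<lambda>x. - f x) x + (\<lambda>x. - f' x) x * (y - x) \<le> (\<lambda>x. - f x) y"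
    by (rule tangent_incr) (auto intro!: derivative_eq_intros der mono x y)
  then show ?thesis by simp
qed

lemma powr_tangent:
  fixes b t u :: real
  assumes "1 \<le> b" "0 < t" "0 < u"
  shows "t powr b + b * t powr (b - 1) * (u - t) \<le> u powr b"
proof -
  have "(\<lambda>x. x powr b) t + (\<lambda>x. b * x powr (b - 1)) t * (u - t) \<le> (\<lambda>x. x powr b) u"
  proof (rule tangent_incr)
    show "((\<lambda>x. x powr b) has_real_derivative b * x powr (b - 1)) (at x)" if "0 < x" for x
      using that by (auto intro!: derivative_eq_intros)
    show "b * x powr (b - 1) \<le> b * y powr (b - 1)" if "0 < x" "x \<le> y" for x y
      using that assms by (intro mult_left_mono powr_mono2) auto
  qed (use assms in auto)
  then show ?thesis by simp
qed

lemma conc_tangent: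
  fixes b a v w :: real
  assumes b: "1 \<le> b" and a: "0 \<le> a" and v: "0 < v" and w: "0 < w"
  shows "(w powr (1/b) + a) powr b \<le> (v powr (1/b) + a) powr b
           + (1 + a * v powr (-1/b)) powr (b - 1) * (w - v)"
proof -
  let ?f = "\<lambda>x. (x powr (1/b) + a) powr b"
  let ?f' = "\<lambda>x. (1 + a * x powr (-1/b)) powr (b - 1)"
  have "?f w \<le> ?f v + ?f' v * (w - v)"
  proof (rule tangent_decr)
    fix x :: real assume x: "0 < x"
    have pos: "0 < x powr (1/b) + a" using x a by (simp add: add_pos_nonneg)
    have "(?f has_real_derivative b * (x powr (1/b) + a) powr (b - 1) * ((1/b) * x powr (1/b - 1))) (at x)"
      using x pos b by (auto intro!: derivative_eq_intros)
    moreover have "b * (x powr (1/b) + a) powr (b - 1) * ((1/b) * x powr (1/b - 1)) = ?f' x"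
    proof -
      have e: "x powr (1/b - 1) = (x powr (-1/b)) powr (b - 1)"
      proof -
        have "1/b - 1 = -1/b * (b - 1)" using b by (simp add: field_simps)
        then show ?thesis by (simp only: powr_powr)
      qed
      have "b * (x powr (1/b) + a) powr (b - 1) * ((1/b) * x powr (1/b - 1))
            = ((x powr (1/b) + a) * x powr (-1/b)) powr (b - 1)"
        using b x pos by (simp add: e powr_mult)
      also have "(x powr (1/b) + a) * x powr (-1/b) = 1 + a * x powr (-1/b)"
        using x by (simp add: distrib_right powr_add[symmetric])
      finally show ?thesis .
    qed
    ultimately show "(?f has_real_derivative ?f' x) (at x)" by simp
  next
    fix x y :: real assume xy: "0 < x" "x \<le> y"
    have "y powr (-1/b) \<le> x powr (-1/b)"
      using xy b by (intro powr_mono2') auto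
    then have "1 + a * y powr (-1/b) \<le> 1 + a * x powr (-1/b)"
      using a by (simp add: mult_left_mono)
    then show "?f' y \<le> ?f' x"
      using b a xy by (intro powr_mono2) auto
  qed (use v w in auto)
  then show ?thesis by simp
qed

lemma powr_split1:
  fixes x b :: real
  assumes "0 < x"
  shows "x powr b = x powr (b - 1) * x"
proof -
  have "x powr ((b - 1) + 1) = x powr (b - 1) * x powr 1" by (rule powr_add)
  then show ?thesis using assms by simp
qed

lemma lyap_real:
  fixes b c0 v a u w :: real
  assumes b: "1 < b" and c0: "0 < c0" and v: "0 < v" and a: "0 < a"
  defines "s \<equiv> v powr (1/b)"
  defines "B \<equiv> (1 + a * v powr (-1/b)) powr (b - 1)"
  defines "A \<equiv> a * (s + a) powr (b - 1)"
  shows "0 \<le> A" "0 \<le> B"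
    "0 < w \<Longrightarrow> (w powr (1/b) + a) powr b \<le> A + B * w"
    "B * v = (s + a) powr (b - 1) * s"
    "B * v powr (1 - 1/b) = (s + a) powr (b - 1)"
proof -
  have s: "0 < s" using v by (simp add: s_def)
  have vs: "v powr (-1/b) = 1 / s"
    using v by (simp add: s_def powr_minus_divide[symmetric])
  have v1: "v powr (1 - 1/b) = s powr (b - 1)"
  proof -
    have "1 - 1/b = 1/b * (b - 1)" using b by (simp add: field_simps)
    then show ?thesis by (simp only: s_def powr_powr)
  qed
  have vb: "v = s powr b" using v b by (simp add: s_def powr_powr)
  have B2: "B = (s + a) powr (b - 1) / s powr (b - 1)"
  proof -
    have "B = (1 + a * (1 / s)) powr (b - 1)" unfolding B_def vs ..
    also have "1 + a * (1 / s) = (s + a) / s" using s by (simp add: field_simps)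
    finally show ?thesis using s a by (simp add: powr_divide)
  qed
  show B3: "B * v powr (1 - 1/b) = (s + a) powr (b - 1)"
    using s by (simp add: B2 v1)
  show B4: "B * v = (s + a) powr (b - 1) * s"
  proof -
    have "v = v powr (1 - 1/b) * s"
      using v by (simp add: s_def powr_add[symmetric])
    then have "B * v = (B * v powr (1 - 1/b)) * s" by (metis mult.assoc)
    then show ?thesis by (simp add: B3)
  qed
  show "0 \<le> A" using a s by (simp add: A_def)
  show "0 \<le> B" by (simp add: B_def)
  assume w: "0 < w"
  have "(w powr (1/b) + a) powr b \<le> (v powr (1/b) + a) powr b
           + (1 + a * v powr (-1/b)) powr (b - 1) * (w - v)"
    using conc_tangent[of b a v w] b a v w by simp
  also have "\<dots> = (s + a) powr b - B * v + B * w"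
    by (simp add: s_def B_def algebra_simps)
  also have "(s + a) powr b = (s + a) powr (b - 1) * (s + a)"
    using s a by (intro powr_split1) simp
  finally show "(w powr (1/b) + a) powr b \<le> A + B * w"
    by (simp add: B4 A_def algebra_simps)
qed

lemma lyap_real2:
  fixes b c0 v a :: real and j :: nat
  assumes b: "1 < b" and c0: "0 < c0" and v: "0 < v"
  defines "c' \<equiv> c0 / (2 * b)"
  defines "a \<equiv> c' * real (Suc j)"
  defines "s \<equiv> v powr (1/b)"
  defines "B \<equiv> (1 + a * v powr (-1/b)) powr (b - 1)"
  defines "A \<equiv> a * (s + a) powr (b - 1)"
  shows "A + B * v - B * (c0 * v powr (1 - 1/b)) + c0 / 2 * a powr (b - 1)
           \<le> (s + c' * real j) powr b"
proof -
  have c': "0 < c'" using c0 b by (simp add: c'_def)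
  have a: "0 < a" using c' by (simp add: a_def)
  have s: "0 < s" using v by (simp add: s_def)
  note L = lyap_real[OF b c0 v a, folded s_def, folded B_def, folded A_def]
  let ?T = "(s + a) powr (b - 1)"
  have "A + B * v - B * (c0 * v powr (1 - 1/b)) = (s + a) * ?T - c0 * ?T"
    using L(4) L(5) by (simp add: A_def algebra_simps)
  also have "(s + a) * ?T = (s + a) powr b"
    using powr_split1[of "s + a" b] s a by simp
  finally have e1: "A + B * v - B * (c0 * v powr (1 - 1/b)) = (s + a) powr b - c0 * ?T" .
  have u: "s + c' * real j = (s + a) - c'"
    by (simp add: a_def algebra_simps)
  have "(s + a) powr b + b * ?T * ((s + c' * real j) - (s + a)) \<le> (s + c' * real j) powr b"
    using powr_tangent[of b "s + a" "s + c' * real j"] b s a c' by (simp add: add_pos_nonneg)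
  moreover have "(s + c' * real j) - (s + a) = - c'" by (simp add: u)
  moreover have "b * c' = c0 / 2" using b by (simp add: c'_def)
  ultimately have e2: "(s + a) powr b - c0 / 2 * ?T \<le> (s + c' * real j) powr b"
  proof -
    assume h: "(s + a) powr b + b * ?T * ((s + c' * real j) - (s + a)) \<le> (s + c' * real j) powr b"
      "(s + c' * real j) - (s + a) = - c'" "b * c' = c0 / 2"
    have "b * ?T * ((s + c' * real j) - (s + a)) = - ((b * c') * ?T)"
      by (simp only: h(2)) (simp add: algebra_simps)
    then show ?thesis using h(1) by (simp add: h(3))
  qed
  have e3: "a powr (b - 1) \<le> ?T"
    using a s b by (intro powr_mono2) auto
  have e4: "c0 / 2 * a powr (b - 1) \<le> c0 / 2 * ?T"
    using e3 c0 by (intro mult_left_mono) auto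
  show ?thesis using e1 e2 e4 by linarith
qed

locale absP =
  fixes P :: "(state \<Rightarrow> ennreal) \<Rightarrow> state \<Rightarrow> ennreal" and S :: "state measure" and pos :: "state set"
  assumes Pmeas: "f \<in> borel_measurable S \<Longrightarrow> P f \<in> borel_measurable S"
  and Padd: "f \<in> borel_measurable S \<Longrightarrow> g \<in> borel_measurable S \<Longrightarrow> P (\<lambda>y. f y + g y) x = P f x + P g x"
  and Pcmult: "f \<in> borel_measurable S \<Longrightarrow> P (\<lambda>y. c * f y) x = c * P f x"
  and Pmono: "(\<And>y. y \<in> pos \<Longrightarrow> f y \<le> g y) \<Longrightarrow> x \<in> pos \<Longrightarrow> P f x \<le> P g x"
  and Pone: "x \<in> pos \<Longrightarrow> P (\<lambda>_. 1) x \<le> 1"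
begin

context
  fixes V :: "state \<Rightarrow> real" and M0 :: real
  assumes Vmeas[measurable]: "V \<in> borel_measurable S"
begin

abbreviation "GG \<equiv> {y. V y \<le> M0}"

lemma ind_meas[measurable]: "(\<lambda>y. indicator (- GG) y :: ennreal) \<in> borel_measurable S"
proof -
  have "(\<lambda>y. indicator (- GG) y :: ennreal) = (\<lambda>y. if M0 < V y then 1 else 0)"
    by (auto simp: indicator_def fun_eq_iff)
  also have "\<dots> \<in> borel_measurable S" by measurable
  finally show ?thesis .
qed

lemma indG_meas[measurable]: "(\<lambda>y. indicator GG y :: ennreal) \<in> borel_measurable S"
proof -
  have "(\<lambda>y. indicator GG y :: ennreal) = (\<lambda>y. if V y \<le> M0 then 1 else 0)"
    by (auto simp: indicator_def fun_eq_iff)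
  also have "\<dots> \<in> borel_measurable S" by measurable
  finally show ?thesis .
qed

lemma surv_meas: "surv P GG k \<in> borel_measurable S"
  by (induction k) (auto intro!: Pmeas borel_measurable_times_ennreal)

lemma hitp_meas: "hitp P GG k \<in> borel_measurable S"
  by (induction k) (auto intro!: Pmeas borel_measurable_times_ennreal indG_meas[unfolded indicator_def])

lemma hit_surv: "x \<in> pos \<Longrightarrow> hitp P GG k x + surv P GG (Suc k) x \<le> surv P GG k x"
proof (induction k arbitrary: x)
  case 0
  have "hitp P GG 0 x + surv P GG 1 x
        = P (\<lambda>y. indicator GG y) x + P (\<lambda>y. indicator (- GG) y * 1) x" by simp
  also have "\<dots> = P (\<lambda>y. indicator GG y + indicator (- GG) y * 1) x"
    by (rule Padd[symmetric]) measurable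
  also have "(\<lambda>y. indicator GG y + indicator (- GG) y * 1 :: ennreal) = (\<lambda>_. 1)"
    by (auto simp: fun_eq_iff indicator_def)
  finally show ?case using Pone[OF 0] by simp
next
  case (Suc k)
  have "hitp P GG (Suc k) x + surv P GG (Suc (Suc k)) x
     = P (\<lambda>y. indicator (- GG) y * hitp P GG k y) x + P (\<lambda>y. indicator (- GG) y * surv P GG (Suc k) y) x"
    by simp
  also have "\<dots> = P (\<lambda>y. indicator (- GG) y * hitp P GG k y + indicator (- GG) y * surv P GG (Suc k) y) x"
    by (rule Padd[symmetric]) (intro borel_measurable_times_ennreal ind_meas hitp_meas surv_meas)+
  also have "\<dots> \<le> P (\<lambda>y. indicator (- GG) y * surv P GG k y) x"
  proof (rule Pmono[OF _ Suc.prems])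
    fix y assume "y \<in> pos"
    then have "hitp P GG k y + surv P GG (Suc k) y \<le> surv P GG k y" by (rule Suc.IH)
    then show "indicator (- GG) y * hitp P GG k y + indicator (- GG) y * surv P GG (Suc k) y
               \<le> indicator (- GG) y * surv P GG k y"
      by (simp add: distrib_left[symmetric] mult_left_mono)
  qed
  finally show ?case by simp
qed

lemma abel:
  assumes x: "x \<in> pos" and b: "0 \<le> b"
  shows "(\<Sum>k<n. ennreal (real (Suc k) powr b) * hitp P GG k x) + ennreal (real n powr b) * surv P GG n x
         \<le> (\<Sum>j<n. ennreal (real (Suc j) powr b - real j powr b) * surv P GG j x)"
proof (induction n)
  case 0
  then show ?case by simp
next
  case (Suc n)
  have d: "ennreal (real (Suc n) powr b) = ennreal (real n powr b) + ennreal (real (Suc n) powr b - real n powr b)"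
    using b by (subst ennreal_plus[symmetric]) (auto intro!: powr_mono2)
  have "(\<Sum>k<Suc n. ennreal (real (Suc k) powr b) * hitp P GG k x) + ennreal (real (Suc n) powr b) * surv P GG (Suc n) x
      = (\<Sum>k<n. ennreal (real (Suc k) powr b) * hitp P GG k x)
        + ennreal (real (Suc n) powr b) * (hitp P GG n x + surv P GG (Suc n) x)"
    by (simp add: distrib_left add.assoc)
  also have "\<dots> \<le> (\<Sum>k<n. ennreal (real (Suc k) powr b) * hitp P GG k x)
        + ennreal (real (Suc n) powr b) * surv P GG n x"
    using hit_surv[OF x, of n] by (intro add_left_mono mult_left_mono) auto
  also have "\<dots> = (\<Sum>k<n. ennreal (real (Suc k) powr b) * hitp P GG k x) + ennreal (real n powr b) * surv P GG n x
        + ennreal (real (Suc n) powr b - real n powr b) * surv P GG n x"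
    by (simp only: d distrib_right add.assoc)
  also have "\<dots> \<le> (\<Sum>j<n. ennreal (real (Suc j) powr b - real j powr b) * surv P GG j x)
        + ennreal (real (Suc n) powr b - real n powr b) * surv P GG n x"
    using Suc.IH by (rule add_right_mono)
  finally show ?case by simp
qed

end
end

context absP begin

context
  fixes V :: "state \<Rightarrow> real" and M0 c0 b Ch :: real
  assumes Vmeas[measurable]: "V \<in> borel_measurable S"
    and M0: "1 < M0" and c0: "0 < c0" and b: "1 < b" and Ch: "0 \<le> Ch"
    and Vnn: "\<And>y. 0 \<le> V y"
    and VB: "\<And>x. x \<in> pos \<Longrightarrow> P (\<lambda>y. ennreal (V y)) x \<le> ennreal (Ch * V x)"
    and drift: "\<And>x. x \<in> pos \<Longrightarrow> M0 < V x \<Longrightarrow>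
        P (\<lambda>y. ennreal (V y)) x + ennreal (c0 * V x powr (1 - 1/b)) \<le> ennreal (V x)"
begin

definition "WW j y = ennreal ((V y powr (1/b) + c0 / (2 * b) * real j) powr b)"
definition "rr j = c0 / 2 * (c0 / (2 * b) * real (Suc j)) powr (b - 1)"
definition "QQ f = P (\<lambda>y. indicator (- {y. V y \<le> M0}) y * f y)"

lemma WW_meas[measurable]: "WW j \<in> borel_measurable S"
  unfolding WW_def[abs_def] by measurable

lemma ind_meas2[measurable]: "(\<lambda>y. indicator (- {y. V y \<le> M0}) y :: ennreal) \<in> borel_measurable S"
  by (rule ind_meas[OF Vmeas])

lemma QQ_meas[measurable]: "f \<in> borel_measurable S \<Longrightarrow> QQ f \<in> borel_measurable S"
  unfolding QQ_def by (intro Pmeas borel_measurable_times_ennreal ind_meas2)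

lemma Pbound_lin:
  assumes x: "x \<in> pos" and A: "0 \<le> A" and B: "0 \<le> B"
    and F: "\<And>z. F z \<le> ennreal A + ennreal B * ennreal (V z)"
  shows "P F x \<le> ennreal A + ennreal B * P (\<lambda>y. ennreal (V y)) x"
proof -
  have "P F x \<le> P (\<lambda>z. ennreal A * (\<lambda>_. 1) z + ennreal B * ennreal (V z)) x"
    using F x by (intro Pmono) auto
  also have "\<dots> = P (\<lambda>z. ennreal A * (\<lambda>_. 1) z) x + P (\<lambda>z. ennreal B * ennreal (V z)) x"
    by (rule Padd) measurable
  also have "\<dots> = ennreal A * P (\<lambda>_. 1) x + ennreal B * P (\<lambda>y. ennreal (V y)) x"
  proof -
    have e1: "P (\<lambda>z. ennreal A * (\<lambda>_. 1) z) x = ennreal A * P (\<lambda>_. 1) x" by (rule Pcmult) simp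
    have e2: "P (\<lambda>z. ennreal B * ennreal (V z)) x = ennreal B * P (\<lambda>y. ennreal (V y)) x"
      by (rule Pcmult) measurable
    show ?thesis using e1 e2 by simp
  qed
  also have "\<dots> \<le> ennreal A * 1 + ennreal B * P (\<lambda>y. ennreal (V y)) x"
    using Pone[OF x] by (intro add_right_mono mult_left_mono) auto
  finally show ?thesis by simp
qed

lemma Qstep:
  assumes y: "y \<in> pos" and yD: "M0 < V y"
  shows "QQ (WW (Suc j)) y + ennreal (rr j) \<le> WW j y"
proof -
  define v where "v = V y"
  have v: "0 < v" using yD M0 by (simp add: v_def)
  define a where "a = c0 / (2 * b) * real (Suc j)"
  have a: "0 < a" using c0 b by (simp add: a_def)
  define s where "s = v powr (1/b)"
  define B where "B = (1 + a * v powr (-1/b)) powr (b - 1)"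
  define A where "A = a * (s + a) powr (b - 1)"
  note L = lyap_real[OF b c0 v a, folded s_def, folded B_def, folded A_def]
  have F: "indicator (- {y. V y \<le> M0}) z * WW (Suc j) z \<le> ennreal A + ennreal B * ennreal (V z)" for z
  proof (cases "M0 < V z")
    case True
    then have "0 < V z" using M0 by simp
    from L(3)[OF this] have "(V z powr (1/b) + a) powr b \<le> A + B * V z" .
    then have "WW (Suc j) z \<le> ennreal (A + B * V z)"
      by (simp add: WW_def a_def ennreal_leI)
    also have "\<dots> = ennreal A + ennreal B * ennreal (V z)"
      using L(1,2) Vnn[of z] by (simp add: ennreal_plus ennreal_mult)
    finally show ?thesis using True by simp
  qed simp
  have "QQ (WW (Suc j)) y \<le> ennreal A + ennreal B * P (\<lambda>y. ennreal (V y)) y"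
    unfolding QQ_def by (rule Pbound_lin[OF y L(1) L(2) F])
  moreover obtain p where p: "P (\<lambda>y. ennreal (V y)) y = ennreal p" "0 \<le> p"
  proof (cases "P (\<lambda>y. ennreal (V y)) y" rule: ennreal_cases)
    case top
    then have False using drift[OF y yD] by (auto simp: top_unique)
    then show ?thesis ..
  qed
  moreover have "p + c0 * v powr (1 - 1/b) \<le> v"
  proof -
    have "ennreal (p + c0 * v powr (1 - 1/b)) \<le> ennreal v"
      using drift[OF y yD] p c0 by (simp add: v_def ennreal_plus)
    then show ?thesis using v by (simp add: ennreal_le_iff)
  qed
  ultimately have "QQ (WW (Suc j)) y + ennreal (rr j) \<le> ennreal (A + B * p + rr j)"
    using L(1,2) p(2) c0 b
    by (simp add: ennreal_plus ennreal_mult rr_def add_right_mono)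
  also have "A + B * p + rr j \<le> A + B * v - B * (c0 * v powr (1 - 1/b)) + c0 / 2 * a powr (b - 1)"
  proof -
    have "B * p \<le> B * (v - c0 * v powr (1 - 1/b))"
      using \<open>p + c0 * v powr (1 - 1/b) \<le> v\<close> L(2) by (intro mult_left_mono) auto
    then show ?thesis by (simp add: rr_def a_def algebra_simps)
  qed
  also have "\<dots> \<le> (s + c0 / (2 * b) * real j) powr b"
    using lyap_real2[OF b c0 v, of j] by (simp add: s_def a_def B_def A_def)
  finally show ?thesis by (simp add: WW_def s_def v_def ennreal_leI)
qed

lemma Qn_meas: "f \<in> borel_measurable S \<Longrightarrow> (QQ ^^ j) f \<in> borel_measurable S"
  by (induction j) (auto intro: QQ_meas)

lemma QQ_add: "f \<in> borel_measurable S \<Longrightarrow> g \<in> borel_measurable S \<Longrightarrow>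
    QQ (\<lambda>y. f y + g y) x = QQ f x + QQ g x"
  unfolding QQ_def by (simp add: distrib_left Padd)

lemma QQ_cmult: "f \<in> borel_measurable S \<Longrightarrow> QQ (\<lambda>y. c * f y) x = c * QQ f x"
proof -
  assume f: "f \<in> borel_measurable S"
  have "QQ (\<lambda>y. c * f y) x = P (\<lambda>y. c * (indicator (- {y. V y \<le> M0}) y * f y)) x"
    unfolding QQ_def by (simp add: mult_ac)
  also have "\<dots> = c * QQ f x" unfolding QQ_def using f by (subst Pcmult) auto
  finally show ?thesis .
qed

lemma Qn_add: "f \<in> borel_measurable S \<Longrightarrow> g \<in> borel_measurable S \<Longrightarrow>
    (QQ ^^ j) (\<lambda>y. f y + g y) x = (QQ ^^ j) f x + (QQ ^^ j) g x"
proof (induction j arbitrary: x)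
  case 0 then show ?case by simp
next
  case (Suc j)
  have "(QQ ^^ j) (\<lambda>y. f y + g y) = (\<lambda>y. (QQ ^^ j) f y + (QQ ^^ j) g y)"
    using Suc by auto
  then show ?case using Suc.prems by (simp add: QQ_add Qn_meas)
qed

lemma Qn_cmult: "f \<in> borel_measurable S \<Longrightarrow> (QQ ^^ j) (\<lambda>y. c * f y) x = c * (QQ ^^ j) f x"
proof (induction j arbitrary: x)
  case 0 then show ?case by simp
next
  case (Suc j)
  have "(QQ ^^ j) (\<lambda>y. c * f y) = (\<lambda>y. c * (QQ ^^ j) f y)"
    using Suc by auto
  then show ?case using Suc.prems by (simp add: QQ_cmult Qn_meas)
qed

lemma QQ_mono: "(\<And>y. y \<in> pos \<Longrightarrow> M0 < V y \<Longrightarrow> f y \<le> g y) \<Longrightarrow> x \<in> pos \<Longrightarrow> QQ f x \<le> QQ g x"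
  unfolding QQ_def by (rule Pmono) (auto simp: indicator_def)

lemma Qn_mono: "(\<And>y. y \<in> pos \<Longrightarrow> f y \<le> g y) \<Longrightarrow> x \<in> pos \<Longrightarrow> (QQ ^^ j) f x \<le> (QQ ^^ j) g x"
proof (induction j arbitrary: x)
  case 0 then show ?case by simp
next
  case (Suc j)
  then show ?case by (simp add: QQ_mono)
qed

lemma Qn_monoD: "(\<And>y. y \<in> pos \<Longrightarrow> M0 < V y \<Longrightarrow> f y \<le> g y) \<Longrightarrow> x \<in> pos \<Longrightarrow>
    (QQ ^^ Suc j) f x \<le> (QQ ^^ Suc j) g x"
  unfolding funpow_Suc_right o_def by (rule Qn_mono) (auto intro: QQ_mono)

lemma surv_Qn: "surv P {y. V y \<le> M0} k = (QQ ^^ k) (\<lambda>_. 1)"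
proof (induction k)
  case 0 then show ?case by (simp add: fun_eq_iff)
next
  case (Suc k)
  then show ?case by (simp add: fun_eq_iff QQ_def)
qed

lemma key_step:
  assumes x: "x \<in> pos"
  shows "(QQ ^^ Suc (Suc j)) (WW (Suc (Suc j))) x + ennreal (rr (Suc j)) * surv P {y. V y \<le> M0} (Suc j) x
         \<le> (QQ ^^ Suc j) (WW (Suc j)) x"
proof -
  have "(QQ ^^ Suc (Suc j)) (WW (Suc (Suc j))) x = (QQ ^^ Suc j) (QQ (WW (Suc (Suc j)))) x"
    by (simp only: funpow_Suc_right o_def)
  moreover have "ennreal (rr (Suc j)) * surv P {y. V y \<le> M0} (Suc j) x
      = (QQ ^^ Suc j) (\<lambda>y. ennreal (rr (Suc j)) * (\<lambda>_. 1) y) x"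
    unfolding surv_Qn by (rule Qn_cmult[symmetric]) simp
  ultimately have "(QQ ^^ Suc (Suc j)) (WW (Suc (Suc j))) x + ennreal (rr (Suc j)) * surv P {y. V y \<le> M0} (Suc j) x
     = (QQ ^^ Suc j) (QQ (WW (Suc (Suc j)))) x + (QQ ^^ Suc j) (\<lambda>y. ennreal (rr (Suc j)) * 1) x"
    by (simp only:)
  also have "\<dots> = (QQ ^^ Suc j) (\<lambda>y. QQ (WW (Suc (Suc j))) y + ennreal (rr (Suc j)) * 1) x"
    by (rule Qn_add[symmetric]) (auto intro: QQ_meas WW_meas)
  also have "\<dots> \<le> (QQ ^^ Suc j) (WW (Suc j)) x"
    by (rule Qn_monoD[OF _ x]) (use Qstep in simp)
  finally show ?thesis .
qed

lemma sum_step: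
  assumes x: "x \<in> pos"
  shows "(\<Sum>j<n. ennreal (rr (Suc j)) * surv P {y. V y \<le> M0} (Suc j) x) + (QQ ^^ Suc n) (WW (Suc n)) x
         \<le> QQ (WW 1) x"
proof (induction n)
  case 0 then show ?case by simp
next
  case (Suc n)
  have "(\<Sum>j<Suc n. ennreal (rr (Suc j)) * surv P {y. V y \<le> M0} (Suc j) x) + (QQ ^^ Suc (Suc n)) (WW (Suc (Suc n))) x
     = (\<Sum>j<n. ennreal (rr (Suc j)) * surv P {y. V y \<le> M0} (Suc j) x)
       + ((QQ ^^ Suc (Suc n)) (WW (Suc (Suc n))) x + ennreal (rr (Suc n)) * surv P {y. V y \<le> M0} (Suc n) x)"
    by (simp add: add_ac)
  also have "\<dots> \<le> (\<Sum>j<n. ennreal (rr (Suc j)) * surv P {y. V y \<le> M0} (Suc j) x) + (QQ ^^ Suc n) (WW (Suc n)) x"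
    using key_step[OF x, of n] by (rule add_left_mono)
  also have "\<dots> \<le> QQ (WW 1) x" by (rule Suc.IH)
  finally show ?case .
qed

lemma first_bound:
  obtains A1 B1 where "0 \<le> A1" "0 \<le> B1" "\<And>x. x \<in> pos \<Longrightarrow> QQ (WW 1) x \<le> ennreal (A1 + B1 * Ch * V x)"
proof -
  define a where "a = c0 / (2 * b) * real (Suc 0)"
  have a: "0 < a" using c0 b by (simp add: a_def)
  have one: "(0::real) < 1" by simp
  define B where "B = (1 + a * 1 powr (-1/b)) powr (b - 1)"
  define A where "A = a * (1 powr (1/b) + a) powr (b - 1)"
  note L = lyap_real[OF b c0 one a, folded B_def, folded A_def]
  have F: "indicator (- {y. V y \<le> M0}) z * WW 1 z \<le> ennreal A + ennreal B * ennreal (V z)" for z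
  proof (cases "M0 < V z")
    case True
    then have "0 < V z" using M0 by simp
    from L(3)[OF this] have "(V z powr (1/b) + a) powr b \<le> A + B * V z" .
    then have "WW 1 z \<le> ennreal (A + B * V z)"
      by (simp add: WW_def a_def ennreal_leI)
    also have "\<dots> = ennreal A + ennreal B * ennreal (V z)"
      using L(1,2) Vnn[of z] by (simp add: ennreal_plus ennreal_mult)
    finally show ?thesis using True by simp
  qed simp
  have "QQ (WW 1) x \<le> ennreal (A + B * Ch * V x)" if x: "x \<in> pos" for x
  proof -
    have "QQ (WW 1) x \<le> ennreal A + ennreal B * P (\<lambda>y. ennreal (V y)) x"
      unfolding QQ_def by (rule Pbound_lin[OF x L(1) L(2) F])
    also have "\<dots> \<le> ennreal A + ennreal B * ennreal (Ch * V x)"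
      using VB[OF x] by (intro add_left_mono mult_left_mono) auto
    also have "\<dots> = ennreal (A + B * Ch * V x)"
      using L(1,2) Ch Vnn[of x] by (simp add: ennreal_plus ennreal_mult mult.assoc)
    finally show ?thesis .
  qed
  then show ?thesis using that L(1,2) by blast
qed


lemma rr_pos: "0 < rr j"
  using c0 b by (simp add: rr_def)

lemma rr_mono: "rr 0 \<le> rr j"
  unfolding rr_def using c0 b by (intro mult_left_mono powr_mono2) auto

lemma delta_bound:
  "real (Suc j) powr b - real j powr b \<le> b / (c0 / 2 * (c0 / (2 * b)) powr (b - 1)) * rr j"
proof -
  have cc: "0 < c0 / (2 * b)" using c0 b by simp
  have "rr j = c0 / 2 * (c0 / (2 * b)) powr (b - 1) * real (Suc j) powr (b - 1)"
  proof -
    have "(c0 / (2 * b) * real (Suc j)) powr (b - 1) = (c0 / (2 * b)) powr (b - 1) * real (Suc j) powr (b - 1)"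
      by (rule powr_mult)
    then show ?thesis unfolding rr_def by simp
  qed
  moreover have "0 < c0 / 2 * (c0 / (2 * b)) powr (b - 1)" using c0 cc by (intro mult_pos_pos) auto
  ultimately have e: "b / (c0 / 2 * (c0 / (2 * b)) powr (b - 1)) * rr j = b * real (Suc j) powr (b - 1)"
    using c0 by (simp add: field_simps)
  have "real (Suc j) powr b - real j powr b \<le> b * real (Suc j) powr (b - 1)"
  proof (cases j)
    case 0 then show ?thesis using b by simp
  next
    case (Suc i)
    have "real (Suc j) powr b + b * real (Suc j) powr (b - 1) * (real j - real (Suc j)) \<le> real j powr b"
      using powr_tangent[of b "real (Suc j)" "real j"] b Suc by simp
    then show ?thesis by (simp add: algebra_simps)
  qed
  then show ?thesis using e by simp
qed

theorem main_abs:
  "\<exists>C5\<ge>0. \<forall>x\<in>pos. return_moment P {y. V y \<le> M0} b x \<le> ennreal (C5 * max (V x) 1)"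
proof -
  obtain A1 B1 where AB: "0 \<le> A1" "0 \<le> B1" "\<And>x. x \<in> pos \<Longrightarrow> QQ (WW 1) x \<le> ennreal (A1 + B1 * Ch * V x)"
    using first_bound by blast
  define Kc where "Kc = b / (c0 / 2 * (c0 / (2 * b)) powr (b - 1))"
  have Kc: "0 \<le> Kc" using c0 b by (simp add: Kc_def)
  define C5 where "C5 = Kc * (rr 0 + A1 + B1 * Ch)"
  have C5: "0 \<le> C5" using Kc AB rr_pos[of 0] Ch by (simp add: C5_def)
  have b0: "0 \<le> b" using b by simp
  have "return_moment P {y. V y \<le> M0} b x \<le> ennreal (C5 * max (V x) 1)" if x: "x \<in> pos" for x
  proof -
    define R where "R = rr 0 + A1 + B1 * Ch * V x"
    have R0: "0 \<le> R" using AB rr_pos[of 0] Ch Vnn[of x] by (simp add: R_def)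
    have S: "(\<Sum>j<n. ennreal (rr j) * surv P {y. V y \<le> M0} j x) \<le> ennreal R" for n
    proof (cases n)
      case 0 then show ?thesis by simp
    next
      case (Suc m)
      have e: "(\<Sum>j<n. ennreal (rr j) * surv P {y. V y \<le> M0} j x)
          = ennreal (rr 0) + (\<Sum>j<m. ennreal (rr (Suc j)) * surv P {y. V y \<le> M0} (Suc j) x)"
        unfolding Suc sum.lessThan_Suc_shift by simp
      have "(\<Sum>j<m. ennreal (rr (Suc j)) * surv P {y. V y \<le> M0} (Suc j) x)
          \<le> (\<Sum>j<m. ennreal (rr (Suc j)) * surv P {y. V y \<le> M0} (Suc j) x) + (QQ ^^ Suc m) (WW (Suc m)) x"
        by simp
      also have "\<dots> \<le> QQ (WW 1) x" by (rule sum_step[OF x])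
      also have "\<dots> \<le> ennreal (A1 + B1 * Ch * V x)" by (rule AB(3)[OF x])
      finally have "ennreal (rr 0) + (\<Sum>j<m. ennreal (rr (Suc j)) * surv P {y. V y \<le> M0} (Suc j) x)
          \<le> ennreal (rr 0) + ennreal (A1 + B1 * Ch * V x)" by (rule add_left_mono)
      also have "\<dots> = ennreal R"
        using rr_pos[of 0] AB Ch Vnn[of x] by (simp add: R_def ennreal_plus add.assoc)
      finally show ?thesis using e by simp
    qed
    have H: "(\<Sum>k. ennreal (real (Suc k) powr b) * hitp P {y. V y \<le> M0} k x) \<le> ennreal (Kc * R)"
    proof (rule suminf_le_const[OF summableI])
      fix n
      have "(\<Sum>k<n. ennreal (real (Suc k) powr b) * hitp P {y. V y \<le> M0} k x)
          \<le> (\<Sum>k<n. ennreal (real (Suc k) powr b) * hitp P {y. V y \<le> M0} k x)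
             + ennreal (real n powr b) * surv P {y. V y \<le> M0} n x" by simp
      also have "\<dots> \<le> (\<Sum>j<n. ennreal (real (Suc j) powr b - real j powr b) * surv P {y. V y \<le> M0} j x)"
        by (rule abel[OF Vmeas x b0])
      also have "\<dots> \<le> (\<Sum>j<n. ennreal Kc * (ennreal (rr j) * surv P {y. V y \<le> M0} j x))"
      proof (rule sum_mono)
        fix j
        have "ennreal (real (Suc j) powr b - real j powr b) \<le> ennreal Kc * ennreal (rr j)"
          using delta_bound[of j] Kc rr_pos[of j] by (simp add: Kc_def ennreal_mult[symmetric] ennreal_leI)
        then show "ennreal (real (Suc j) powr b - real j powr b) * surv P {y. V y \<le> M0} j x
            \<le> ennreal Kc * (ennreal (rr j) * surv P {y. V y \<le> M0} j x)"
          by (simp add: mult.assoc[symmetric] mult_right_mono)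
      qed
      also have "\<dots> = ennreal Kc * (\<Sum>j<n. ennreal (rr j) * surv P {y. V y \<le> M0} j x)"
        by (simp add: sum_distrib_left)
      also have "\<dots> \<le> ennreal Kc * ennreal R" using S by (rule mult_left_mono) simp
      also have "\<dots> = ennreal (Kc * R)" using Kc R0 by (simp add: ennreal_mult)
      finally show "(\<Sum>k<n. ennreal (real (Suc k) powr b) * hitp P {y. V y \<le> M0} k x) \<le> ennreal (Kc * R)" .
    qed
    have I: "(INF k. surv P {y. V y \<le> M0} k x) = 0"
    proof (rule ccontr)
      let ?m = "INF k. surv P {y. V y \<le> M0} k x"
      assume m0: "?m \<noteq> 0"
      have m1: "?m \<le> 1" by (rule INF_lower2[of 0]) auto
      then obtain m' where m': "?m = ennreal m'" "0 \<le> m'"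
        by (cases ?m rule: ennreal_cases) (auto simp: top_unique)
      then have mpos: "0 < m'" using m0 by (auto simp: order.order_iff_strict)
      have "real n * (rr 0 * m') \<le> R" for n
      proof -
        have "ennreal (real n * (rr 0 * m')) = (\<Sum>j<n. ennreal (rr 0) * ?m)"
          using m' rr_pos[of 0] by (simp add: ennreal_mult ennreal_of_nat_eq_real_of_nat)
        also have "\<dots> \<le> (\<Sum>j<n. ennreal (rr j) * surv P {y. V y \<le> M0} j x)"
          by (intro sum_mono mult_mono ennreal_leI rr_mono INF_lower) auto
        also have "\<dots> \<le> ennreal R" by (rule S)
        finally show ?thesis using R0 by (simp add: ennreal_le_iff)
      qed
      moreover obtain n where "R < real n * (rr 0 * m')"
        using ex_less_of_nat_mult[of "rr 0 * m'" R] rr_pos[of 0] mpos by auto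
      ultimately show False by (meson not_le)
    qed
    have "return_moment P {y. V y \<le> M0} b x = (\<Sum>k. ennreal (real (Suc k) powr b) * hitp P {y. V y \<le> M0} k x)"
      unfolding return_moment_def I by simp
    also have "\<dots> \<le> ennreal (Kc * R)" by (rule H)
    also have "Kc * R \<le> C5 * max (V x) 1"
    proof -
      have m1: "1 \<le> max (V x) 1" and m2: "V x \<le> max (V x) 1" by auto
      have "rr 0 * 1 \<le> rr 0 * max (V x) 1" using m1 rr_pos[of 0] by (intro mult_left_mono) auto
      moreover have "A1 * 1 \<le> A1 * max (V x) 1" using m1 AB by (intro mult_left_mono) auto
      moreover have "(B1 * Ch) * V x \<le> (B1 * Ch) * max (V x) 1" using m2 AB Ch by (intro mult_left_mono) auto
      ultimately have "R \<le> (rr 0 + A1 + B1 * Ch) * max (V x) 1"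
        unfolding R_def distrib_right by linarith
      then show ?thesis using Kc unfolding C5_def by (simp add: mult.assoc mult_left_mono)
    qed
    then have "ennreal (Kc * R) \<le> ennreal (C5 * max (V x) 1)" by (rule ennreal_leI)
    finally show ?thesis .
  qed
  then show ?thesis using C5 by blast
qed

end
end

abbreviation SS :: "state measure" where "SS \<equiv> PiM UNIV (\<lambda>_. borel)"

lemma space_SS[simp]: "space SS = UNIV"
  by (simp add: space_PiM PiE_UNIV_domain)

lemma comp_meas[measurable (raw)]:
  "F \<in> measurable M SS \<Longrightarrow> (\<lambda>w. F w i) \<in> borel_measurable M"
  by (rule measurable_compose[OF _ measurable_component_singleton]) auto

lemma upd_meas[measurable (raw)]:
  assumes [measurable]: "F \<in> measurable M SS" "G \<in> borel_measurable M"
  shows "(\<lambda>w. (F w)(i := G w)) \<in> measurable M SS"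
proof -
  have "(\<lambda>w. (F w)(i := G w)) = (\<lambda>w j. if j = i then G w else F w j)"
    by (auto simp: fun_eq_iff)
  also have "\<dots> \<in> measurable M SS"
    by (rule measurable_PiM_single') auto
  finally show ?thesis .
qed

lemma bond_meas[measurable]:
  assumes [measurable]: "f \<in> borel_measurable SS"
  shows "bond_jump i f \<in> borel_measurable SS"
  unfolding bond_jump_def[abs_def] unif_int_def by measurable

lemma left_meas[measurable]:
  assumes [measurable]: "f \<in> borel_measurable SS"
  shows "left_jump T f \<in> borel_measurable SS"
  unfolding left_jump_def[abs_def] unif_int_def exp_int_def by measurable

lemma right_meas[measurable]:
  assumes [measurable]: "f \<in> borel_measurable SS"
  shows "right_jump N T f \<in> borel_measurable SS"
  unfolding right_jump_def[abs_def] unif_int_def exp_int_def by measurable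

lemma Jop_meas[measurable]:
  assumes [measurable]: "f \<in> borel_measurable SS"
  shows "Jop N TL TR K f \<in> borel_measurable SS"
  unfolding Jop_def[abs_def] Let_def total_rate_def rate_def by measurable

lemma unif_int_add:
  assumes [measurable]: "f \<in> borel_measurable borel" "g \<in> borel_measurable borel"
  shows "unif_int (\<lambda>p. f p + g p) = unif_int f + unif_int g"
  unfolding unif_int_def by (simp add: distrib_left nn_integral_add)

lemma unif_int_cmult:
  assumes [measurable]: "f \<in> borel_measurable borel"
  shows "unif_int (\<lambda>p. c * f p) = c * unif_int f"
  unfolding unif_int_def by (simp add: mult.left_commute nn_integral_cmult)

lemma unif_int_mono:
  "(\<And>p. 0 < p \<Longrightarrow> p < 1 \<Longrightarrow> f p \<le> g p) \<Longrightarrow> unif_int f \<le> unif_int g"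
  unfolding unif_int_def by (intro nn_integral_mono) (auto simp: indicator_def)

lemma exp_int_add:
  assumes [measurable]: "f \<in> borel_measurable borel" "g \<in> borel_measurable borel"
  shows "exp_int T (\<lambda>p. f p + g p) = exp_int T f + exp_int T g"
  unfolding exp_int_def by (simp add: distrib_left nn_integral_add)

lemma exp_int_cmult:
  assumes [measurable]: "f \<in> borel_measurable borel"
  shows "exp_int T (\<lambda>p. c * f p) = c * exp_int T f"
  unfolding exp_int_def by (simp add: mult.left_commute nn_integral_cmult)

lemma exp_int_mono:
  "(\<And>p. 0 < p \<Longrightarrow> f p \<le> g p) \<Longrightarrow> exp_int T f \<le> exp_int T g"
  unfolding exp_int_def by (intro nn_integral_mono) (auto simp: indicator_def intro: mult_left_mono)

lemma unif_int_one: "unif_int (\<lambda>_. 1) = 1"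
  unfolding unif_int_def by simp

lemma exp_int_one:
  assumes T: "0 < T"
  shows "exp_int T (\<lambda>_. 1) = 1"
proof -
  have "((\<lambda>x. exp (- (1/T) * x)) has_integral exp (- (1/T) * 0) / (1/T)) {0..}"
    using T by (intro has_integral_exp_minus_to_infinity) auto
  then have "((\<lambda>x. exp (- (1/T) * x)) has_integral T) {0..}" by simp
  then have "((\<lambda>x. (1/T) * exp (- (1/T) * x)) has_integral (1/T) * T) {0..}"
    by (rule has_integral_mult_right)
  then have I: "((\<lambda>x. exp (- x / T) / T) has_integral 1) {0..}"
    using T by simp
  have "(\<integral>\<^sup>+ x. ennreal (exp (- x / T) / T) * indicator {0..} x \<partial>lborel) = ennreal 1"
    by (rule nn_integral_has_integral_lebesgue'[OF _ I]) (use T in auto)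
  moreover have "(\<integral>\<^sup>+ x. ennreal (exp (- x / T) / T) * indicator {0..} x \<partial>lborel)
      = (\<integral>\<^sup>+ X. indicator {0<..} X * ennreal (exp (- X / T) / T) * 1 \<partial>lborel)"
    by (intro nn_integral_cong_AE eventually_mono[OF AE_lborel_singleton[of 0]])
       (auto simp: indicator_def)
  ultimately show ?thesis unfolding exp_int_def by simp
qed

lemma int_powr:
  fixes e :: real
  assumes e: "-1 < e"
  shows "(\<integral>\<^sup>+ p. indicator {0<..<1} p * ennreal (p powr e) \<partial>lborel) = ennreal (1 / (e + 1))"
proof -
  have I: "((\<lambda>x. x powr e) has_integral (1 / (e + 1))) {0..1}"
    using has_integral_powr_from_0[OF e, of 1] by simp
  have "(\<integral>\<^sup>+ x. ennreal (x powr e) * indicator {0..1} x \<partial>lborel) = ennreal (1 / (e + 1))"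
    by (rule nn_integral_has_integral_lebesgue'[OF _ I]) auto
  moreover have "(\<integral>\<^sup>+ x. ennreal (x powr e) * indicator {0..1} x \<partial>lborel)
      = (\<integral>\<^sup>+ p. indicator {0<..<1} p * ennreal (p powr e) \<partial>lborel)"
    by (intro nn_integral_cong_AE eventually_mono[OF AE_conjI[OF AE_lborel_singleton[of 0] AE_lborel_singleton[of 1]]])
       (auto simp: indicator_def)
  ultimately show ?thesis by simp
qed

lemma int_powr_refl:
  fixes e :: real
  assumes e: "-1 < e"
  shows "(\<integral>\<^sup>+ p. indicator {0<..<1} p * ennreal ((1 - p) powr e) \<partial>lborel) = ennreal (1 / (e + 1))"
proof -
  have "(\<integral>\<^sup>+ p. indicator {0<..<1} p * ennreal ((1 - p) powr e) \<partial>lborel)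
     = ennreal \<bar>-1\<bar> * (\<integral>\<^sup>+ p. indicator {0<..<1} (1 + -1 * p) * ennreal ((1 - (1 + -1 * p)) powr e) \<partial>lborel)"
    by (rule nn_integral_real_affine) auto
  also have "(\<lambda>p. indicator {0<..<1} (1 + -1 * p) * ennreal ((1 - (1 + -1 * p)) powr e) :: ennreal)
      = (\<lambda>p. indicator {0<..<1} p * ennreal (p powr e))"
    by (auto simp: fun_eq_iff indicator_def)
  finally show ?thesis using int_powr[OF e] by simp
qed

lemma pos_bond:
  assumes x: "pos_state N x" and i: "Suc i < N" and p: "0 < p" "p < 1"
  shows "pos_state N (x(i := p * (x i + x (Suc i)), Suc i := (1 - p) * (x i + x (Suc i))))"
proof -
  have "0 < x i" "0 < x (Suc i)" using x i by (auto simp: pos_state_def)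
  then show ?thesis using x p by (auto simp: pos_state_def)
qed

lemma pos_one:
  assumes x: "pos_state N x" and j: "j < N" and p: "0 < p" and X: "0 < X"
  shows "pos_state N (x(j := p * (x j + X)))"
proof -
  have "0 < x j" using x j by (auto simp: pos_state_def)
  then show ?thesis using x p X by (auto simp: pos_state_def)
qed

lemma ennreal_plus4:
  "0 \<le> a \<Longrightarrow> 0 \<le> b \<Longrightarrow> 0 \<le> c \<Longrightarrow> 0 \<le> d \<Longrightarrow>
    ennreal a + ennreal b + ennreal c + ennreal d = ennreal (a + b + c + d)"
  by (simp add: ennreal_plus)

lemma rate_nonneg: "0 < a \<Longrightarrow> 0 < b' \<Longrightarrow> 0 < K \<Longrightarrow> 0 \<le> rate K a b'"
  by (simp add: rate_def)

lemma rate_le: "rate K a b' \<le> K"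
  by (simp add: rate_def)

lemma bond_add:
  assumes [measurable]: "f \<in> borel_measurable SS" "g \<in> borel_measurable SS"
  shows "bond_jump i (\<lambda>y. f y + g y) x = bond_jump i f x + bond_jump i g x"
  unfolding bond_jump_def by (rule unif_int_add) measurable

lemma bond_cmult:
  assumes [measurable]: "f \<in> borel_measurable SS"
  shows "bond_jump i (\<lambda>y. c * f y) x = c * bond_jump i f x"
  unfolding bond_jump_def by (rule unif_int_cmult) measurable

lemma left_add:
  assumes [measurable]: "f \<in> borel_measurable SS" "g \<in> borel_measurable SS"
  shows "left_jump T (\<lambda>y. f y + g y) x = left_jump T f x + left_jump T g x"
proof -
  have "left_jump T (\<lambda>y. f y + g y) x
     = unif_int (\<lambda>p. exp_int T (\<lambda>X. f (x(0 := p * (x 0 + X)))) + exp_int T (\<lambda>X. g (x(0 := p * (x 0 + X)))))"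
  proof -
    have "exp_int T (\<lambda>X. f (x(0 := p * (x 0 + X))) + g (x(0 := p * (x 0 + X))))
        = exp_int T (\<lambda>X. f (x(0 := p * (x 0 + X)))) + exp_int T (\<lambda>X. g (x(0 := p * (x 0 + X))))" for p
      by (rule exp_int_add) measurable
    then show ?thesis unfolding left_jump_def by simp
  qed
  also have "\<dots> = left_jump T f x + left_jump T g x"
    unfolding left_jump_def by (rule unif_int_add) (unfold exp_int_def, measurable)
  finally show ?thesis .
qed

lemma left_cmult:
  assumes [measurable]: "f \<in> borel_measurable SS"
  shows "left_jump T (\<lambda>y. c * f y) x = c * left_jump T f x"
proof -
  have "left_jump T (\<lambda>y. c * f y) x
     = unif_int (\<lambda>p. c * exp_int T (\<lambda>X. f (x(0 := p * (x 0 + X)))))"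
  proof -
    have "exp_int T (\<lambda>X. c * f (x(0 := p * (x 0 + X)))) = c * exp_int T (\<lambda>X. f (x(0 := p * (x 0 + X))))" for p
      by (rule exp_int_cmult) measurable
    then show ?thesis unfolding left_jump_def by simp
  qed
  also have "\<dots> = c * left_jump T f x"
    unfolding left_jump_def by (rule unif_int_cmult) (unfold exp_int_def, measurable)
  finally show ?thesis .
qed

lemma right_add:
  assumes [measurable]: "f \<in> borel_measurable SS" "g \<in> borel_measurable SS"
  shows "right_jump N T (\<lambda>y. f y + g y) x = right_jump N T f x + right_jump N T g x"
proof -
  have "right_jump N T (\<lambda>y. f y + g y) x
     = unif_int (\<lambda>p. exp_int T (\<lambda>X. f (x(N - 1 := p * (x (N - 1) + X)))) + exp_int T (\<lambda>X. g (x(N - 1 := p * (x (N - 1) + X)))))"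
  proof -
    have "exp_int T (\<lambda>X. f (x(N - 1 := p * (x (N - 1) + X))) + g (x(N - 1 := p * (x (N - 1) + X))))
        = exp_int T (\<lambda>X. f (x(N - 1 := p * (x (N - 1) + X)))) + exp_int T (\<lambda>X. g (x(N - 1 := p * (x (N - 1) + X))))" for p
      by (rule exp_int_add) measurable
    then show ?thesis unfolding right_jump_def by simp
  qed
  also have "\<dots> = right_jump N T f x + right_jump N T g x"
    unfolding right_jump_def by (rule unif_int_add) (unfold exp_int_def, measurable)
  finally show ?thesis .
qed

lemma right_cmult:
  assumes [measurable]: "f \<in> borel_measurable SS"
  shows "right_jump N T (\<lambda>y. c * f y) x = c * right_jump N T f x"
proof -
  have "right_jump N T (\<lambda>y. c * f y) x
     = unif_int (\<lambda>p. c * exp_int T (\<lambda>X. f (x(N - 1 := p * (x (N - 1) + X)))))"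
  proof -
    have "exp_int T (\<lambda>X. c * f (x(N - 1 := p * (x (N - 1) + X)))) = c * exp_int T (\<lambda>X. f (x(N - 1 := p * (x (N - 1) + X))))" for p
      by (rule exp_int_cmult) measurable
    then show ?thesis unfolding right_jump_def by simp
  qed
  also have "\<dots> = c * right_jump N T f x"
    unfolding right_jump_def by (rule unif_int_cmult) (unfold exp_int_def, measurable)
  finally show ?thesis .
qed

lemma Jop_add:
  assumes [measurable]: "f \<in> borel_measurable SS" "g \<in> borel_measurable SS"
  shows "Jop N TL TR K (\<lambda>y. f y + g y) x = Jop N TL TR K f x + Jop N TL TR K g x"
  unfolding Jop_def Let_def
  by (simp add: bond_add left_add right_add distrib_left sum.distrib add_ac)

lemma Jop_cmult:
  assumes [measurable]: "f \<in> borel_measurable SS"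
  shows "Jop N TL TR K (\<lambda>y. c * f y) x = c * Jop N TL TR K f x"
  unfolding Jop_def Let_def
  by (simp add: bond_cmult left_cmult right_cmult distrib_left sum_distrib_left mult_ac)

lemma Jop_mono:
  assumes N: "1 \<le> N" and x: "pos_state N x" and fg: "\<And>y. pos_state N y \<Longrightarrow> f y \<le> g y"
  shows "Jop N TL TR K f x \<le> Jop N TL TR K g x"
proof -
  have b: "bond_jump i f x \<le> bond_jump i g x" if "i < N - 1" for i
    unfolding bond_jump_def using that
    by (intro unif_int_mono fg pos_bond[OF x]) auto
  have l: "left_jump TL f x \<le> left_jump TL g x"
    unfolding left_jump_def using N
    by (intro unif_int_mono exp_int_mono fg pos_one[OF x]) auto
  have r: "right_jump N TR f x \<le> right_jump N TR g x"
    unfolding right_jump_def using N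
    by (intro unif_int_mono exp_int_mono fg pos_one[OF x]) auto
  have "f x \<le> g x" by (rule fg[OF x])
  then show ?thesis unfolding Jop_def Let_def
    by (intro add_mono sum_mono mult_left_mono b l r) auto
qed

lemma total_rate_bounds:
  assumes N: "1 \<le> N" and x: "pos_state N x" and K: "0 < K" and TL: "0 < TL" and TR: "0 < TR"
  shows "0 \<le> total_rate N TL TR K x" "total_rate N TL TR K x \<le> unif_const N K"
proof -
  have xi: "0 < x i" if "i < N" for i using x that by (auto simp: pos_state_def)
  have s: "0 \<le> (\<Sum>i<N - 1. rate K (x i) (x (Suc i)))"
    using xi K by (intro sum_nonneg rate_nonneg) auto
  have s2: "(\<Sum>i<N - 1. rate K (x i) (x (Suc i))) \<le> (\<Sum>i<N - 1. K)"
    by (intro sum_mono rate_le)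
  have "0 \<le> rate K TL (x 0)" "0 \<le> rate K (x (N - 1)) TR"
    using xi N TL TR K by (auto intro!: rate_nonneg)
  then show "0 \<le> total_rate N TL TR K x" using s by (simp add: total_rate_def)
  have "total_rate N TL TR K x \<le> real (N - 1) * K + K + K"
    using s2 rate_le[of K TL "x 0"] rate_le[of K "x (N - 1)" TR] by (simp add: total_rate_def)
  also have "\<dots> = unif_const N K" using N by (simp add: unif_const_def of_nat_diff algebra_simps)
  finally show "total_rate N TL TR K x \<le> unif_const N K" .
qed

lemma Jop_one:
  assumes N: "1 \<le> N" and x: "pos_state N x" and K: "0 < K" and TL: "0 < TL" and TR: "0 < TR"
  shows "Jop N TL TR K (\<lambda>_. 1) x = 1"
proof -
  define L where "L = unif_const N K"
  have L: "0 < L" using N K by (simp add: L_def unif_const_def)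
  have xi: "0 < x i" if "i < N" for i using x that by (auto simp: pos_state_def)
  note tr = total_rate_bounds[OF N x K TL TR, folded L_def]
  have bj: "bond_jump i (\<lambda>_. 1) x = 1" for i by (simp add: bond_jump_def unif_int_one)
  have lj: "left_jump TL (\<lambda>_. 1) x = 1" using TL by (simp add: left_jump_def exp_int_one unif_int_one)
  have rj: "right_jump N TR (\<lambda>_. 1) x = 1" using TR by (simp add: right_jump_def exp_int_one unif_int_one)
  have r1: "0 \<le> rate K (x i) (x (Suc i)) / L" if "i < N - 1" for i
    using xi[of i] xi[of "Suc i"] that K L by (auto intro!: divide_nonneg_pos rate_nonneg)
  have r2: "0 \<le> rate K TL (x 0) / L" "0 \<le> rate K (x (N - 1)) TR / L"
    using xi N TL TR K L by (auto intro!: divide_nonneg_pos rate_nonneg)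
  have r3: "0 \<le> 1 - total_rate N TL TR K x / L" using tr L by simp
  have se: "(\<Sum>i<N - 1. ennreal (rate K (x i) (x (Suc i)) / L)) = ennreal (\<Sum>i<N - 1. rate K (x i) (x (Suc i)) / L)"
    using r1 by (intro sum_ennreal) auto
  have s0: "0 \<le> (\<Sum>i<N - 1. rate K (x i) (x (Suc i)) / L)" using r1 by (intro sum_nonneg) auto
  have "Jop N TL TR K (\<lambda>_. 1) x = ennreal ((\<Sum>i<N - 1. rate K (x i) (x (Suc i)) / L)
       + rate K TL (x 0) / L + rate K (x (N - 1)) TR / L + (1 - total_rate N TL TR K x / L))"
    unfolding Jop_def Let_def L_def[symmetric] bj lj rj mult_1_right se
    by (rule ennreal_plus4[OF s0 r2(1) r2(2) r3])
  also have "(\<Sum>i<N - 1. rate K (x i) (x (Suc i)) / L)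
       + rate K TL (x 0) / L + rate K (x (N - 1)) TR / L + (1 - total_rate N TL TR K x / L) = 1"
    using L by (simp add: total_rate_def sum_divide_distrib[symmetric] add_divide_distrib[symmetric] diff_divide_distrib)
  finally show ?thesis by simp
qed

lemma a_coef_bounds:
  assumes m: "1 \<le> m" "m \<le> N"
  shows "1/2 \<le> a_coef N m" "a_coef N m \<le> 1"
proof -
  have N: "1 \<le> N" using m by simp
  have d: "(1::real) \<le> 2 ^ N - 1"
  proof -
    have "(2::real) ^ 1 \<le> 2 ^ N" using N by (intro power_increasing) auto
    then show ?thesis by simp
  qed
  have n0: "(0::real) \<le> 2 ^ (m - 1) - 1" by simp
  have "(2::real) ^ (m - 1) \<le> 2 ^ (N - 1)" using m by (intro power_increasing) auto
  moreover have "(2::real) ^ N = 2 * 2 ^ (N - 1)" using N by (metis One_nat_def Suc_pred less_le_trans zero_less_one power_Suc)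
  moreover have "2 * ((2::real) ^ (m - 1) - 1) = 2 * 2 ^ (m - 1) - 2" by simp
  ultimately have "2 * ((2::real) ^ (m - 1) - 1) \<le> (2::real) ^ N - 1" by linarith
  then have "(2 ^ (m - 1) - 1) / (2 ^ N - 1) \<le> (1::real) / 2"
    using d by (simp add: divide_simps)
  then show "1/2 \<le> a_coef N m" by (simp add: a_coef_def)
  show "a_coef N m \<le> 1" using n0 d by (simp add: a_coef_def)
qed

lemma Vfun_meas[measurable]: "Vfun N \<eta> \<in> borel_measurable SS"
  unfolding Vfun_def[abs_def] by measurable

lemma Vfun_nonneg: "0 \<le> Vfun N \<eta> x"
  unfolding Vfun_def by (intro sum_nonneg) auto

lemma Vfun_scale:
  assumes eta: "0 < \<eta>" "\<eta> \<le> 1" and x: "pos_state N x" and q: "0 < q" "q \<le> 1"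
    and x': "\<And>j. j < N \<Longrightarrow> q * x j \<le> x' j"
  shows "Vfun N \<eta> x' \<le> q powr (\<eta> / 2 - 1) * Vfun N \<eta> x"
  unfolding Vfun_def sum_distrib_left
proof (intro sum_mono)
  fix m k assume m: "m \<in> {1..N}" and k: "k \<in> {..<N - m + 1}"
  define e where "e = a_coef N m * \<eta> - 1"
  have e1: "e \<le> 0" using a_coef_bounds[of m N] m eta
    by (simp add: e_def) (metis mult_le_one less_imp_le order_trans)
  have e2: "\<eta> / 2 - 1 \<le> e" using a_coef_bounds[of m N] m eta
    by (simp add: e_def)
  have idx: "k + j < N" if "j < m" for j using m k that by auto
  have S: "0 < (\<Sum>j<m. x (k + j))"
    using m idx x by (intro sum_pos) (auto simp: pos_state_def lessThan_empty_iff)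
  have S': "q * (\<Sum>j<m. x (k + j)) \<le> (\<Sum>j<m. x' (k + j))"
    unfolding sum_distrib_left using idx x' by (intro sum_mono) auto
  have "(\<Sum>j<m. x' (k + j)) powr e \<le> (q * (\<Sum>j<m. x (k + j))) powr e"
    using S S' q e1 by (intro powr_mono2') auto
  also have "\<dots> = q powr e * (\<Sum>j<m. x (k + j)) powr e" by (rule powr_mult)
  also have "\<dots> \<le> q powr (\<eta> / 2 - 1) * (\<Sum>j<m. x (k + j)) powr e"
    using q e2 by (intro mult_right_mono powr_mono') auto
  finally show "(\<Sum>j<m. x' (k + j)) powr (a_coef N m * \<eta> - 1)
      \<le> q powr (\<eta> / 2 - 1) * (\<Sum>j<m. x (k + j)) powr (a_coef N m * \<eta> - 1)"
    by (simp add: e_def)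
qed

lemma unif_int_const: "unif_int (\<lambda>_. c) = c"
  using unif_int_cmult[of "\<lambda>_. 1" c] by (simp add: unif_int_one)

lemma exp_int_const: "0 < T \<Longrightarrow> exp_int T (\<lambda>_. c) = c"
  using exp_int_cmult[of "\<lambda>_. 1" T c] by (simp add: exp_int_one)

lemma Jop_mono_pieces:
  assumes "\<And>i. i < N - 1 \<Longrightarrow> bond_jump i f x \<le> bond_jump i g x"
    "left_jump TL f x \<le> left_jump TL g x" "right_jump N TR f x \<le> right_jump N TR g x" "f x \<le> g x"
  shows "Jop N TL TR K f x \<le> Jop N TL TR K g x"
  unfolding Jop_def Let_def using assms
  by (intro add_mono sum_mono mult_left_mono) auto

lemma Jop_const:
  assumes "1 \<le> N" "pos_state N x" "0 < K" "0 < TL" "0 < TR"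
  shows "Jop N TL TR K (\<lambda>_. c) x = c"
  using Jop_cmult[of "\<lambda>_. 1" N TL TR K c x] Jop_one[OF assms] by simp

lemma Jop_V:
  assumes N: "1 \<le> N" and x: "pos_state N x" and K: "0 < K" and TL: "0 < TL" and TR: "0 < TR"
    and eta: "0 < \<eta>" "\<eta> \<le> 1"
  shows "Jop N TL TR K (\<lambda>y. ennreal (Vfun N \<eta> y)) x \<le> ennreal (4 / \<eta> * Vfun N \<eta> x)"
proof -
  define e where "e = \<eta> / 2 - 1"
  have e1: "-1 < e" using eta by (simp add: e_def)
  have e2: "1 / (e + 1) = 2 / \<eta>" by (simp add: e_def)
  define c where "c = 4 / \<eta> * Vfun N \<eta> x"
  have V0: "0 \<le> Vfun N \<eta> x" by (rule Vfun_nonneg)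
  have xi: "0 < x j" if "j < N" for j using x that by (auto simp: pos_state_def)
  have I1: "unif_int (\<lambda>p. ennreal (p powr e)) = ennreal (2 / \<eta>)"
    unfolding unif_int_def using int_powr[OF e1] e2 by simp
  have I2: "unif_int (\<lambda>p. ennreal ((1 - p) powr e)) = ennreal (2 / \<eta>)"
    unfolding unif_int_def using int_powr_refl[OF e1] e2 by simp
  have bond: "bond_jump i (\<lambda>y. ennreal (Vfun N \<eta> y)) x \<le> bond_jump i (\<lambda>_. ennreal c) x" if i: "i < N - 1" for i
  proof -
    have "bond_jump i (\<lambda>y. ennreal (Vfun N \<eta> y)) x
        \<le> unif_int (\<lambda>p. ennreal (Vfun N \<eta> x) * (ennreal (p powr e) + ennreal ((1 - p) powr e)))"
      unfolding bond_jump_def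
    proof (rule unif_int_mono)
      fix p :: real assume p: "0 < p" "p < 1"
      define q where "q = min p (1 - p)"
      have q: "0 < q" "q \<le> 1" using p by (auto simp: q_def)
      have "Vfun N \<eta> (x(i := p * (x i + x (Suc i)), Suc i := (1 - p) * (x i + x (Suc i))))
          \<le> q powr (\<eta> / 2 - 1) * Vfun N \<eta> x"
      proof (rule Vfun_scale[OF eta x q])
        fix j assume j: "j < N"
        have xs: "0 < x i" "0 < x (Suc i)" using xi i by auto
        have a: "q * x i \<le> p * (x i + x (Suc i))"
          using xs p q_def by (intro mult_mono) auto
        have b: "q * x (Suc i) \<le> (1 - p) * (x i + x (Suc i))"
          using xs p q_def by (intro mult_mono) auto
        have c: "q * x j \<le> x j" using mult_right_mono[OF q(2), of "x j"] xi[OF j] by simp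
        show "q * x j \<le> (x(i := p * (x i + x (Suc i)), Suc i := (1 - p) * (x i + x (Suc i)))) j"
          using a b c by auto
      qed
      also have "q powr (\<eta> / 2 - 1) \<le> p powr e + (1 - p) powr e"
        using p by (auto simp: q_def e_def min_def)
      then have "q powr (\<eta> / 2 - 1) * Vfun N \<eta> x \<le> (p powr e + (1 - p) powr e) * Vfun N \<eta> x"
        using V0 by (intro mult_right_mono)
      finally have "Vfun N \<eta> (x(i := p * (x i + x (Suc i)), Suc i := (1 - p) * (x i + x (Suc i))))
          \<le> Vfun N \<eta> x * (p powr e + (1 - p) powr e)" by (simp add: mult.commute)
      then show "ennreal (Vfun N \<eta> (x(i := p * (x i + x (Suc i)), Suc i := (1 - p) * (x i + x (Suc i)))))
          \<le> ennreal (Vfun N \<eta> x) * (ennreal (p powr e) + ennreal ((1 - p) powr e))"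
        using V0 by (simp add: ennreal_plus[symmetric] ennreal_mult[symmetric] ennreal_leI del: ennreal_plus)
    qed
    also have "\<dots> = ennreal (Vfun N \<eta> x) * (unif_int (\<lambda>p. ennreal (p powr e)) + unif_int (\<lambda>p. ennreal ((1 - p) powr e)))"
      by (subst unif_int_cmult) (measurable, subst unif_int_add, auto)
    also have "\<dots> = ennreal c"
      using V0 eta by (simp add: I1 I2 c_def ennreal_plus[symmetric] ennreal_mult[symmetric] del: ennreal_plus)
    finally show ?thesis by (simp add: bond_jump_def unif_int_const)
  qed
  have one: "unif_int (\<lambda>p. exp_int T (\<lambda>X. ennreal (Vfun N \<eta> (x(j := p * (x j + X)))))) \<le> ennreal c"
    if j: "j < N" and T: "0 < T" for j T
  proof -
    have "unif_int (\<lambda>p. exp_int T (\<lambda>X. ennreal (Vfun N \<eta> (x(j := p * (x j + X))))))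
        \<le> unif_int (\<lambda>p. ennreal (Vfun N \<eta> x) * ennreal (p powr e))"
    proof (rule unif_int_mono)
      fix p :: real assume p: "0 < p" "p < 1"
      have "exp_int T (\<lambda>X. ennreal (Vfun N \<eta> (x(j := p * (x j + X)))))
          \<le> exp_int T (\<lambda>X. ennreal (Vfun N \<eta> x) * ennreal (p powr e))"
      proof (rule exp_int_mono)
        fix X :: real assume X: "0 < X"
        have "Vfun N \<eta> (x(j := p * (x j + X))) \<le> p powr (\<eta> / 2 - 1) * Vfun N \<eta> x"
        proof (rule Vfun_scale[OF eta x p(1)])
          show "p \<le> 1" using p by simp
          fix l assume l: "l < N"
          have "p * x j \<le> p * (x j + X)" using p X by simp
          moreover have "p * x l \<le> x l" using mult_right_mono[of p 1 "x l"] xi[OF l] p by simp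
          ultimately show "p * x l \<le> (x(j := p * (x j + X))) l" by auto
        qed
        then show "ennreal (Vfun N \<eta> (x(j := p * (x j + X)))) \<le> ennreal (Vfun N \<eta> x) * ennreal (p powr e)"
          using V0 by (simp add: e_def ennreal_mult[symmetric] ennreal_leI mult.commute)
      qed
      also have "\<dots> = ennreal (Vfun N \<eta> x) * ennreal (p powr e)" using T by (rule exp_int_const)
      finally show "exp_int T (\<lambda>X. ennreal (Vfun N \<eta> (x(j := p * (x j + X))))) \<le> ennreal (Vfun N \<eta> x) * ennreal (p powr e)" .
    qed
    also have "\<dots> = ennreal (Vfun N \<eta> x) * ennreal (2 / \<eta>)"
      by (subst unif_int_cmult) (measurable, simp add: I1)
    also have "\<dots> \<le> ennreal c"
    proof -
      have "2 / \<eta> \<le> 4 / \<eta>" using eta by (simp add: divide_right_mono)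
      then have "Vfun N \<eta> x * (2 / \<eta>) \<le> Vfun N \<eta> x * (4 / \<eta>)" using V0 by (rule mult_left_mono)
      then show ?thesis using V0 eta by (simp add: c_def ennreal_mult[symmetric] ennreal_leI mult.commute)
    qed
    finally show ?thesis .
  qed
  have "Jop N TL TR K (\<lambda>y. ennreal (Vfun N \<eta> y)) x \<le> Jop N TL TR K (\<lambda>_. ennreal c) x"
  proof (rule Jop_mono_pieces)
    show "bond_jump i (\<lambda>y. ennreal (Vfun N \<eta> y)) x \<le> bond_jump i (\<lambda>_. ennreal c) x" if "i < N - 1" for i
      using bond that .
    show "left_jump TL (\<lambda>y. ennreal (Vfun N \<eta> y)) x \<le> left_jump TL (\<lambda>_. ennreal c) x"
      unfolding left_jump_def using one[of 0 TL] N TL by (simp add: exp_int_const unif_int_const)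
    show "right_jump N TR (\<lambda>y. ennreal (Vfun N \<eta> y)) x \<le> right_jump N TR (\<lambda>_. ennreal c) x"
      unfolding right_jump_def using one[of "N - 1" TR] N TR by (simp add: exp_int_const unif_int_const)
    show "ennreal (Vfun N \<eta> x) \<le> ennreal c"
    proof -
      have "Vfun N \<eta> x * \<eta> \<le> Vfun N \<eta> x * 4" using V0 eta by (intro mult_left_mono) auto
      then show ?thesis using V0 eta by (intro ennreal_leI) (simp add: c_def divide_simps mult.commute)
    qed
  qed
  also have "\<dots> = ennreal c" by (rule Jop_const[OF N x K TL TR])
  finally show ?thesis by (simp add: c_def)
qed

context
  fixes N :: nat and TL TR K :: real
  assumes N: "1 \<le> N" and K: "0 < K" and TL: "0 < TL" and TR: "0 < TR"
begin

lemma Jn_meas[measurable]: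
  assumes [measurable]: "f \<in> borel_measurable SS"
  shows "(Jop N TL TR K ^^ k) f \<in> borel_measurable SS"
  by (induction k) auto

lemma Jn_add:
  assumes [measurable]: "f \<in> borel_measurable SS" "g \<in> borel_measurable SS"
  shows "(Jop N TL TR K ^^ k) (\<lambda>y. f y + g y) x = (Jop N TL TR K ^^ k) f x + (Jop N TL TR K ^^ k) g x"
proof (induction k arbitrary: x)
  case 0 then show ?case by simp
next
  case (Suc k)
  have "(Jop N TL TR K ^^ k) (\<lambda>y. f y + g y) = (\<lambda>y. (Jop N TL TR K ^^ k) f y + (Jop N TL TR K ^^ k) g y)"
    using Suc by auto
  then show ?case by (simp add: Jop_add)
qed

lemma Jn_cmult:
  assumes [measurable]: "f \<in> borel_measurable SS"
  shows "(Jop N TL TR K ^^ k) (\<lambda>y. c * f y) x = c * (Jop N TL TR K ^^ k) f x"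
proof (induction k arbitrary: x)
  case 0 then show ?case by simp
next
  case (Suc k)
  have "(Jop N TL TR K ^^ k) (\<lambda>y. c * f y) = (\<lambda>y. c * (Jop N TL TR K ^^ k) f y)"
    using Suc by auto
  then show ?case by (simp add: Jop_cmult)
qed

lemma Jn_mono:
  "(\<And>y. pos_state N y \<Longrightarrow> f y \<le> g y) \<Longrightarrow> pos_state N x \<Longrightarrow>
    (Jop N TL TR K ^^ k) f x \<le> (Jop N TL TR K ^^ k) g x"
proof (induction k arbitrary: x)
  case 0 then show ?case by simp
next
  case (Suc k)
  then show ?case by (simp add: Jop_mono[OF N])
qed

lemma Jn_one: "pos_state N x \<Longrightarrow> (Jop N TL TR K ^^ k) (\<lambda>_. 1) x \<le> 1"
proof (induction k arbitrary: x)
  case 0 then show ?case by simp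
next
  case (Suc k)
  have "(Jop N TL TR K ^^ Suc k) (\<lambda>_. 1) x \<le> Jop N TL TR K (\<lambda>_. 1) x"
    using Suc by (simp add: Jop_mono[OF N])
  also have "\<dots> = 1" by (rule Jop_one[OF N Suc.prems K TL TR])
  finally show ?case .
qed

lemma Jn_V:
  assumes eta: "0 < \<eta>" "\<eta> \<le> 1"
  shows "pos_state N x \<Longrightarrow> (Jop N TL TR K ^^ k) (\<lambda>y. ennreal (Vfun N \<eta> y)) x
           \<le> ennreal ((4 / \<eta>) ^ k * Vfun N \<eta> x)"
proof (induction k arbitrary: x)
  case 0 then show ?case by simp
next
  case (Suc k)
  have "(Jop N TL TR K ^^ Suc k) (\<lambda>y. ennreal (Vfun N \<eta> y)) x
      = Jop N TL TR K ((Jop N TL TR K ^^ k) (\<lambda>y. ennreal (Vfun N \<eta> y))) x" by simp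
  also have "\<dots> \<le> Jop N TL TR K (\<lambda>y. ennreal ((4 / \<eta>) ^ k) * ennreal (Vfun N \<eta> y)) x"
  proof (rule Jop_mono[OF N Suc.prems])
    fix y assume y: "pos_state N y"
    have "ennreal ((4 / \<eta>) ^ k * Vfun N \<eta> y) = ennreal ((4 / \<eta>) ^ k) * ennreal (Vfun N \<eta> y)"
      using eta Vfun_nonneg[of N \<eta> y] by (intro ennreal_mult) auto
    then show "(Jop N TL TR K ^^ k) (\<lambda>y. ennreal (Vfun N \<eta> y)) y \<le> ennreal ((4 / \<eta>) ^ k) * ennreal (Vfun N \<eta> y)"
      using Suc.IH[OF y] by simp
  qed
  also have "\<dots> = ennreal ((4 / \<eta>) ^ k) * Jop N TL TR K (\<lambda>y. ennreal (Vfun N \<eta> y)) x"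
    by (rule Jop_cmult) measurable
  also have "\<dots> \<le> ennreal ((4 / \<eta>) ^ k) * ennreal (4 / \<eta> * Vfun N \<eta> x)"
    by (intro mult_left_mono Jop_V[OF N Suc.prems K TL TR eta]) auto
  also have "\<dots> = ennreal ((4 / \<eta>) ^ Suc k * Vfun N \<eta> x)"
    using eta Vfun_nonneg[of N \<eta> x] by (simp add: ennreal_mult[symmetric] mult_ac)
  finally show ?case .
qed

lemma Pt_meas:
  assumes [measurable]: "f \<in> borel_measurable SS"
  shows "Pt N TL TR K h f \<in> borel_measurable SS"
  unfolding Pt_def[abs_def]
  by (rule borel_measurable_suminf_order) (auto intro!: borel_measurable_times_ennreal Jn_meas assms)

lemma Pt_add:
  assumes [measurable]: "f \<in> borel_measurable SS" "g \<in> borel_measurable SS"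
  shows "Pt N TL TR K h (\<lambda>y. f y + g y) x = Pt N TL TR K h f x + Pt N TL TR K h g x"
proof -
  define w where "w k = ennreal (exp (- unif_const N K * h) * (unif_const N K * h) ^ k / fact k)" for k
  have "Pt N TL TR K h (\<lambda>y. f y + g y) x = (\<Sum>k. w k * (Jop N TL TR K ^^ k) f x + w k * (Jop N TL TR K ^^ k) g x)"
    unfolding Pt_def w_def[symmetric] by (simp only: Jn_add[OF assms] distrib_left)
  also have "\<dots> = (\<Sum>k. w k * (Jop N TL TR K ^^ k) f x) + (\<Sum>k. w k * (Jop N TL TR K ^^ k) g x)"
    by (rule suminf_add[OF summableI summableI, symmetric])
  finally show ?thesis unfolding Pt_def w_def .
qed

lemma Pt_cmult:
  assumes [measurable]: "f \<in> borel_measurable SS"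
  shows "Pt N TL TR K h (\<lambda>y. c * f y) x = c * Pt N TL TR K h f x"
proof -
  define w where "w k = ennreal (exp (- unif_const N K * h) * (unif_const N K * h) ^ k / fact k)" for k
  have "Pt N TL TR K h (\<lambda>y. c * f y) x = (\<Sum>k. c * (w k * (Jop N TL TR K ^^ k) f x))"
    unfolding Pt_def w_def[symmetric] by (simp only: Jn_cmult[OF assms] mult.left_commute)
  also have "\<dots> = c * (\<Sum>k. w k * (Jop N TL TR K ^^ k) f x)"
    by (rule ennreal_suminf_cmult)
  finally show ?thesis unfolding Pt_def w_def .
qed

lemma Pt_mono:
  assumes fg: "\<And>y. pos_state N y \<Longrightarrow> f y \<le> g y" and x: "pos_state N x"
  shows "Pt N TL TR K h f x \<le> Pt N TL TR K h g x"
  unfolding Pt_def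
proof (rule suminf_le[OF _ summableI summableI])
  fix k
  show "ennreal (exp (- unif_const N K * h) * (unif_const N K * h) ^ k / fact k) * (Jop N TL TR K ^^ k) f x
     \<le> ennreal (exp (- unif_const N K * h) * (unif_const N K * h) ^ k / fact k) * (Jop N TL TR K ^^ k) g x"
    by (rule mult_left_mono[OF Jn_mono[OF fg x]]) auto
qed

lemma exp_weights_sums:
  fixes a c :: real
  shows "(\<lambda>k. exp (- a) * c ^ k / fact k) sums (exp (- a) * exp c)"
proof -
  have "(\<lambda>n. exp (- a) * (c ^ n /\<^sub>R fact n)) sums (exp (- a) * exp c)"
    by (rule sums_mult[OF exp_converges])
  then show ?thesis by (simp add: divide_inverse mult_ac)
qed

lemma Pt_one:
  assumes h: "0 \<le> h" and x: "pos_state N x"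
  shows "Pt N TL TR K h (\<lambda>_. 1) x \<le> 1"
proof -
  define a where "a = unif_const N K * h"
  have a: "0 \<le> a" using h K by (simp add: a_def unif_const_def)
  define w where "w k = exp (- unif_const N K * h) * (unif_const N K * h) ^ k / fact k" for k
  have w0: "0 \<le> w k" for k using a by (simp add: w_def a_def[symmetric])
  have ws: "w sums 1"
  proof -
    have "(\<lambda>k. exp (- a) * a ^ k / fact k) sums (exp (- a) * exp a)" by (rule exp_weights_sums)
    moreover have "(\<lambda>k. exp (- a) * a ^ k / fact k) = w" by (simp add: fun_eq_iff w_def a_def)
    moreover have "exp (- a) * exp a = 1" by (simp add: exp_add[symmetric])
    ultimately show ?thesis by simp
  qed
  have "Pt N TL TR K h (\<lambda>_. 1) x \<le> (\<Sum>k. ennreal (w k))"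
    unfolding Pt_def w_def[symmetric]
  proof (rule suminf_le[OF _ summableI summableI])
    fix k show "ennreal (w k) * (Jop N TL TR K ^^ k) (\<lambda>_. 1) x \<le> ennreal (w k)"
      using Jn_one[OF x, of k] by (intro mult_left_le) auto
  qed
  also have "\<dots> = ennreal (\<Sum>k. w k)"
    using ws w0 by (intro suminf_ennreal2) (auto simp: sums_iff)
  also have "(\<Sum>k. w k) = 1" using ws by (simp add: sums_iff)
  finally show ?thesis by simp
qed

lemma Pt_V:
  assumes h: "0 \<le> h" and x: "pos_state N x" and eta: "0 < \<eta>" "\<eta> \<le> 1"
  shows "Pt N TL TR K h (\<lambda>y. ennreal (Vfun N \<eta> y)) x
     \<le> ennreal (exp (- (unif_const N K * h)) * exp (4 / \<eta> * (unif_const N K * h)) * Vfun N \<eta> x)"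
proof -
  define a where "a = unif_const N K * h"
  have a: "0 \<le> a" using h K by (simp add: a_def unif_const_def)
  define v where "v = Vfun N \<eta> x"
  have v: "0 \<le> v" using Vfun_nonneg by (simp add: v_def)
  have S: "(\<lambda>k. exp (- a) * (4 / \<eta> * a) ^ k / fact k * v) sums (exp (- a) * exp (4 / \<eta> * a) * v)"
    by (rule sums_mult2[OF exp_weights_sums])
  have "Pt N TL TR K h (\<lambda>y. ennreal (Vfun N \<eta> y)) x \<le> (\<Sum>k. ennreal (exp (- a) * (4 / \<eta> * a) ^ k / fact k * v))"
    unfolding Pt_def
  proof (intro suminf_le[OF _ summableI summableI])
    fix k
    have ea: "exp (- unif_const N K * h) * (unif_const N K * h) ^ k / fact k = exp (- a) * a ^ k / fact k"
      by (simp add: a_def)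
    have "ennreal (exp (- unif_const N K * h) * (unif_const N K * h) ^ k / fact k) * (Jop N TL TR K ^^ k) (\<lambda>y. ennreal (Vfun N \<eta> y)) x
        \<le> ennreal (exp (- a) * a ^ k / fact k) * ennreal ((4 / \<eta>) ^ k * v)"
      unfolding ea
      using Jn_V[OF eta x] by (intro mult_left_mono) (auto simp: v_def)
    also have "\<dots> = ennreal (exp (- a) * (4 / \<eta> * a) ^ k / fact k * v)"
    proof -
      have "(4 / \<eta> * a) ^ k = (4 / \<eta>) ^ k * a ^ k" by (rule power_mult_distrib)
      then show ?thesis using a v eta by (simp add: ennreal_mult[symmetric] mult_ac)
    qed
    finally show "ennreal (exp (- unif_const N K * h) * (unif_const N K * h) ^ k / fact k) * (Jop N TL TR K ^^ k) (\<lambda>y. ennreal (Vfun N \<eta> y)) x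
        \<le> ennreal (exp (- a) * (4 / \<eta> * a) ^ k / fact k * v)" .
  qed
  also have "\<dots> = ennreal (\<Sum>k. exp (- a) * (4 / \<eta> * a) ^ k / fact k * v)"
    using S a v eta by (intro suminf_ennreal2) (auto simp: sums_iff)
  also have "(\<Sum>k. exp (- a) * (4 / \<eta> * a) ^ k / fact k * v) = exp (- a) * exp (4 / \<eta> * a) * v"
    using S by (simp add: sums_iff)
  finally show ?thesis by (simp add: a_def v_def)
qed

end

lemma main_concrete:
  fixes N :: nat and TL TR K \<eta> h M0 c0 :: real
  assumes N: "1 \<le> N" and TL: "0 < TL" and TR: "0 < TR" and K: "1 \<le> K"
    and eta: "0 < \<eta> \<and> \<eta> < 1/4" and h: "0 < h \<and> h < 1" and M0: "1 < M0" and c0: "0 < c0"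
    and drift: "\<forall>x. pos_state N x \<longrightarrow> Vfun N \<eta> x > M0 \<longrightarrow>
           Pt N TL TR K h (\<lambda>y. ennreal (Vfun N \<eta> y)) x
             + ennreal (c0 * Vfun N \<eta> x powr (1 - 1 / (2 * (1 - \<eta>))))
           \<le> ennreal (Vfun N \<eta> x)"
  shows "\<exists>C5::real.
          (\<forall>x. pos_state N x \<longrightarrow>
             return_moment (Pt N TL TR K h) {y. Vfun N \<eta> y \<le> M0} (2 - 2 * \<eta>) x
               \<le> ennreal (C5 * max (Vfun N \<eta> x) 1)) \<and>
          (\<forall>x. pos_state N x \<longrightarrow> Vfun N \<eta> x \<le> M0 \<longrightarrow>
             return_moment (Pt N TL TR K h) {y. Vfun N \<eta> y \<le> M0} (2 - 2 * \<eta>) x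
               \<le> ennreal (C5 * M0))"
proof -
  have K0: "0 < K" using K by simp
  have h0: "0 \<le> h" using h by simp
  have e1: "0 < \<eta>" "\<eta> \<le> 1" using eta by auto
  interpret absP "Pt N TL TR K h" SS "{x. pos_state N x}"
  proof
    show "Pt N TL TR K h f \<in> borel_measurable SS" if "f \<in> borel_measurable SS" for f
      using Pt_meas[OF N K0 TL TR that] .
    show "Pt N TL TR K h (\<lambda>y. f y + g y) x = Pt N TL TR K h f x + Pt N TL TR K h g x"
      if "f \<in> borel_measurable SS" "g \<in> borel_measurable SS" for f g x
      using Pt_add[OF N K0 TL TR that] .
    show "Pt N TL TR K h (\<lambda>y. c * f y) x = c * Pt N TL TR K h f x"
      if "f \<in> borel_measurable SS" for f c x
      using Pt_cmult[OF N K0 TL TR that] .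
    show "Pt N TL TR K h f x \<le> Pt N TL TR K h g x"
      if "\<And>y. y \<in> {x. pos_state N x} \<Longrightarrow> f y \<le> g y" "x \<in> {x. pos_state N x}" for f g x
      using Pt_mono[OF N K0 TL TR, of f g x h] that by auto
    show "Pt N TL TR K h (\<lambda>_. 1) x \<le> 1" if "x \<in> {x. pos_state N x}" for x
      using Pt_one[OF N K0 TL TR h0, of x] that by auto
  qed
  define Ch where "Ch = exp (- (unif_const N K * h)) * exp (4 / \<eta> * (unif_const N K * h))"
  have Ch: "0 \<le> Ch" by (simp add: Ch_def)
  have b: "1 < 2 - 2 * \<eta>" using eta by simp
  have VB: "\<And>x. x \<in> {x. pos_state N x} \<Longrightarrow>
      Pt N TL TR K h (\<lambda>y. ennreal (Vfun N \<eta> y)) x \<le> ennreal (Ch * Vfun N \<eta> x)"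
    using Pt_V[OF N K0 TL TR h0 _ e1] by (simp add: Ch_def)
  have ex: "1 / (2 * (1 - \<eta>)) = 1 / (2 - 2 * \<eta>)" by (simp add: algebra_simps)
  have dr: "\<And>x. x \<in> {x. pos_state N x} \<Longrightarrow> M0 < Vfun N \<eta> x \<Longrightarrow>
      Pt N TL TR K h (\<lambda>y. ennreal (Vfun N \<eta> y)) x + ennreal (c0 * Vfun N \<eta> x powr (1 - 1 / (2 - 2 * \<eta>)))
        \<le> ennreal (Vfun N \<eta> x)"
    using drift by (simp add: ex)
  obtain C5 where C5: "0 \<le> C5" and bound: "\<forall>x\<in>{x. pos_state N x}.
      return_moment (Pt N TL TR K h) {y. Vfun N \<eta> y \<le> M0} (2 - 2 * \<eta>) x \<le> ennreal (C5 * max (Vfun N \<eta> x) 1)"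
    using main_abs[OF Vfun_meas M0 c0 b Ch Vfun_nonneg VB dr] by blast
  show ?thesis
  proof (intro exI[of _ C5] conjI allI impI)
    fix x assume x: "pos_state N x"
    then show "return_moment (Pt N TL TR K h) {y. Vfun N \<eta> y \<le> M0} (2 - 2 * \<eta>) x \<le> ennreal (C5 * max (Vfun N \<eta> x) 1)"
      using bound by auto
    assume V: "Vfun N \<eta> x \<le> M0"
    have "C5 * max (Vfun N \<eta> x) 1 \<le> C5 * M0" using V M0 C5 by (intro mult_left_mono) auto
    then have "ennreal (C5 * max (Vfun N \<eta> x) 1) \<le> ennreal (C5 * M0)" by (rule ennreal_leI)
    then show "return_moment (Pt N TL TR K h) {y. Vfun N \<eta> y \<le> M0} (2 - 2 * \<eta>) x \<le> ennreal (C5 * M0)"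
      using bound x by (auto intro: order_trans)
  qed
qed

theorem proposition5p2:
  fixes N :: nat and TL TR :: real
  assumes "N \<ge> 1" and "TL > 0" and "TR > 0"
  shows "\<exists>K0. \<forall>K\<ge>K0. \<exists>\<eta>0>0. \<forall>\<eta>. 0 < \<eta> \<and> \<eta> < \<eta>0 \<longrightarrow>
    (\<exists>h0>0. \<forall>h. 0 < h \<and> h < h0 \<longrightarrow>
      (\<forall>M0 c0. M0 > 1 \<longrightarrow> c0 > 0 \<longrightarrow>
        (\<forall>x. pos_state N x \<longrightarrow> Vfun N \<eta> x > M0 \<longrightarrow>
           Pt N TL TR K h (\<lambda>y. ennreal (Vfun N \<eta> y)) x
             + ennreal (c0 * Vfun N \<eta> x powr (1 - 1 / (2 * (1 - \<eta>))))
           \<le> ennreal (Vfun N \<eta> x)) \<longrightarrow>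
        (\<exists>C5::real.
          (\<forall>x. pos_state N x \<longrightarrow>
             return_moment (Pt N TL TR K h) {y. Vfun N \<eta> y \<le> M0} (2 - 2 * \<eta>) x
               \<le> ennreal (C5 * max (Vfun N \<eta> x) 1)) \<and>
          (\<forall>x. pos_state N x \<longrightarrow> Vfun N \<eta> x \<le> M0 \<longrightarrow>
             return_moment (Pt N TL TR K h) {y. Vfun N \<eta> y \<le> M0} (2 - 2 * \<eta>) x
               \<le> ennreal (C5 * M0)))))"
  apply (rule exI[of _ 1])
  apply (intro allI impI)
  apply (rule exI[of _ "1/4"])
  apply (intro conjI allI impI)
   apply simp
  apply (rule exI[of _ 1])
  apply (intro conjI allI impI)
   apply simp
  apply (rule main_concrete)
  using assms by auto


end
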